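(* Let $a<b$, let $h:[a,b]\to[0,\infty)$ be a concave function that is not identically zero, and let $\alpha,\beta>0$. Let $\mathrm{g}_\alpha(h)=\frac{\int_a^b t\,h(t)^\alpha\,dt}{\int_a^b h(t)^\alpha\,dt}$. If $\beta\leq\alpha$ then \[\frac{\int_{\mathrm{g}_\alpha(h)}^b h(t)^\beta\,dt}{\int_a^b h(t)^\beta\,dt}\geq\left(\frac{\beta+1}{\alpha+2}\right)^{\beta+1},\] whereas if $\alpha\leq\beta$ then \[\frac{\int_{\mathrm{g}_\alpha(h)}^b h(t)^\beta\,dt}{\int_a^b h(t)^\beta\,dt}\geq\left(\frac{\alpha+1}{\alpha+2}\right)^{\beta+1}.\] *)

theory Defs
  imports "HOL-Analysis.Analysis"
begin

definition g_alpha :: "real \<Rightarrow> real \<Rightarrow> real \<Rightarrow> (real \<Rightarrow> real) \<Rightarrow> real" where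
  "g_alpha \<alpha> a b h =
     integral {a..b} (\<lambda>t. t * h t powr \<alpha>) / integral {a..b} (\<lambda>t. h t powr \<alpha>)"

end

theory Submission
  imports Defs
begin


locale cf =
  fixes a b :: real and h :: "real \<Rightarrow> real"
  assumes ab: "a < b"
    and conc: "concave_on {a..b} h"
    and nn: "\<And>t. t \<in> {a..b} \<Longrightarrow> h t \<ge> 0"
    and nz: "\<exists>t\<in>{a..b}. h t \<noteq> 0"
begin

lemma chord:
  assumes "a \<le> u" "u < v" "v \<le> b" "u \<le> t" "t \<le> v"
  shows "(v - u) * h t \<ge> (v - t) * h u + (t - u) * h v"
proof -
  define \<theta> where "\<theta> = (t - u) / (v - u)"
  have th: "0 \<le> \<theta>" "\<theta> \<le> 1" using assms by (auto simp: \<theta>_def field_simps)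
  have vu: "v - u \<noteq> 0" using assms by simp
  have tt: "(1 - \<theta>) * u + \<theta> * v = t"
  proof -
    have "\<theta> * (v - u) = t - u" using vu by (simp add: \<theta>_def)
    moreover have "(1 - \<theta>) * u + \<theta> * v = u + \<theta> * (v - u)" by algebra
    ultimately show ?thesis by simp
  qed
  have "h ((1 - \<theta>) *\<^sub>R u + \<theta> *\<^sub>R v) \<ge> (1 - \<theta>) * h u + \<theta> * h v"
    by (rule concave_onD[OF conc th]) (use assms in auto)
  hence "h t \<ge> (1 - \<theta>) * h u + \<theta> * h v" by (simp add: tt)
  hence "(v - u) * h t \<ge> (v - u) * ((1 - \<theta>) * h u + \<theta> * h v)"
    using assms by (intro mult_left_mono) auto
  also have "(v - u) * ((1 - \<theta>) * h u + \<theta> * h v) = (v - t) * h u + (t - u) * h v"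
  proof -
    have e1: "\<theta> * (v - u) = t - u" using vu by (simp add: \<theta>_def)
    have e2: "(1 - \<theta>) * (v - u) = v - t" using e1 by (simp add: algebra_simps)
    have "(v - u) * ((1 - \<theta>) * h u + \<theta> * h v) = ((1 - \<theta>) * (v - u)) * h u + (\<theta> * (v - u)) * h v"
      by algebra
    thus ?thesis by (simp only: e1 e2)
  qed
  finally show ?thesis .
qed

lemma pos: assumes "a < t" "t < b" shows "h t > 0"
proof -
  obtain t0 where t0: "t0 \<in> {a..b}" "h t0 \<noteq> 0" using nz by auto
  have h0: "h t0 > 0" using t0 nn[of t0] by auto
  consider "t0 = t" | "t0 < t" | "t < t0" by linarith
  thus ?thesis
  proof cases
    case 1 thus ?thesis using h0 by simp
  next
    case 2
    have "(b - t0) * h t \<ge> (b - t) * h t0 + (t - t0) * h b"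
      using 2 t0 assms by (intro chord) auto
    moreover have "(b - t) * h t0 > 0" using assms h0 by simp
    moreover have "(t - t0) * h b \<ge> 0" using 2 nn[of b] ab by simp
    ultimately have "(b - t0) * h t > 0" by linarith
    thus ?thesis using 2 assms by (simp add: zero_less_mult_iff)
  next
    case 3
    have "(t0 - a) * h t \<ge> (t0 - t) * h a + (t - a) * h t0"
      using 3 t0 assms by (intro chord) auto
    moreover have "(t - a) * h t0 > 0" using assms h0 by simp
    moreover have "(t0 - t) * h a \<ge> 0" using 3 nn[of a] ab by simp
    ultimately have "(t0 - a) * h t > 0" by linarith
    thus ?thesis using 3 assms by (simp add: zero_less_mult_iff)
  qed
qed

definition "Bd = 2 * h ((a + b) / 2)"

lemma bound: assumes "t \<in> {a..b}" shows "h t \<le> Bd"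
proof -
  define t' where "t' = a + b - t"
  have t': "t' \<in> {a..b}" using assms by (auto simp: t'_def)
  have e: "(1 - 1/2) *\<^sub>R t + (1/2) *\<^sub>R t' = (a + b) / 2" by (simp add: t'_def field_simps)
  have "h ((1 - 1/2) *\<^sub>R t + (1/2) *\<^sub>R t') \<ge> (1 - 1/2) * h t + (1/2) * h t'"
    by (rule concave_onD[OF conc]) (use assms t' in auto)
  hence "h ((a + b) / 2) \<ge> (1 - 1/2) * h t + (1/2) * h t'" by (simp only: e)
  moreover have "h t' \<ge> 0" using nn t' by auto
  ultimately show ?thesis by (simp add: Bd_def)
qed

lemma cont: "continuous_on {a<..<b} h"
proof -
  have "convex_on {a..b} (\<lambda>x. - h x)" using conc by (simp add: concave_on_def)
  hence "convex_on {a<..<b} (\<lambda>x. - h x)" by (rule convex_on_subset) auto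
  hence "continuous_on {a<..<b} (\<lambda>x. - h x)" by (intro convex_on_continuous) auto
  from continuous_on_minus[OF this] show ?thesis by simp
qed

end


lemma intg_Ioo:
  fixes f :: "real \<Rightarrow> real"
  assumes "continuous_on {a<..<b} f" "\<And>t. t \<in> {a<..<b} \<Longrightarrow> \<bar>f t\<bar> \<le> M"
  shows "f integrable_on {a..b}"
proof -
  have m: "f \<in> borel_measurable (lebesgue_on {a<..<b})"
    by (rule continuous_imp_measurable_on_sets_lebesgue[OF assms(1)]) auto
  have "(\<lambda>_. M) integrable_on {a..b}" by (rule integrable_const_ivl)
  hence c: "(\<lambda>_. M) integrable_on {a<..<b}" by (simp add: integrable_on_Icc_iff_Ioo)
  have "f integrable_on {a<..<b}"
    by (rule measurable_bounded_by_integrable_imp_integrable_real[OF m c assms(2)]) auto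
  thus ?thesis by (simp add: integrable_on_Icc_iff_Ioo)
qed

lemma cont_bounded:
  fixes w :: "real \<Rightarrow> real"
  assumes "continuous_on {a..b} w"
  shows "\<exists>M. \<forall>t\<in>{a..b}. \<bar>w t\<bar> \<le> M"
proof -
  have "bounded (w ` {a..b})" by (rule compact_imp_bounded[OF compact_continuous_image[OF assms]]) simp
  then obtain M where "\<forall>y\<in>w ` {a..b}. norm y \<le> M" by (auto simp: bounded_iff)
  thus ?thesis by auto
qed

lemma deriv_integral:
  fixes f :: "real \<Rightarrow> real"
  assumes "f integrable_on {a..b}" "continuous_on {a<..<b} f" "x \<in> {a<..<b}"
  shows "((\<lambda>y. integral {a..y} f) has_real_derivative f x) (at x)"
proof -
  have ct: "continuous (at x) f"
    using assms(2,3) by (simp add: continuous_on_eq_continuous_at)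
  hence "continuous (at x within ({a..b} - {})) f" by (rule continuous_at_imp_continuous_within)
  from integral_has_vector_derivative_continuous_at[OF assms(1) _ _ this]
  have "((\<lambda>u. integral {a..u} f) has_vector_derivative f x) (at x within {a..b})"
    using assms(3) by auto
  moreover have "at x within {a..b} = at x"
    using assms(3) by (intro at_within_interior) auto
  ultimately show ?thesis by (simp add: has_real_derivative_iff_has_vector_derivative)
qed

context cf begin

definition "Pr \<gamma> x = integral {a..x} (\<lambda>t. h t powr \<gamma>)"
definition "Phi \<gamma> x = integral {x..b} (\<lambda>t. h t powr \<gamma>)"
definition "Tot \<gamma> = integral {a..b} (\<lambda>t. h t powr \<gamma>)"

lemma hpow_cont: "continuous_on {a<..<b} (\<lambda>t. h t powr \<gamma>)"
  by (intro continuous_on_powr cont continuous_on_const) (use pos in force)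

lemma wint:
  assumes "continuous_on {a..b} w" "\<gamma> \<ge> 0"
  shows "(\<lambda>t. w t * h t powr \<gamma>) integrable_on {a..b}"
proof -
  obtain M where M: "\<forall>t\<in>{a..b}. \<bar>w t\<bar> \<le> M" using cont_bounded[OF assms(1)] by blast
  show ?thesis
  proof (rule intg_Ioo)
    show "continuous_on {a<..<b} (\<lambda>t. w t * h t powr \<gamma>)"
      by (intro continuous_intros hpow_cont continuous_on_subset[OF assms(1)]) auto
    fix t assume t: "t \<in> {a<..<b}"
    have "\<bar>w t\<bar> \<le> M" using M t by auto
    moreover have "h t powr \<gamma> \<le> Bd powr \<gamma>"
      using t pos[of t] bound[of t] assms(2) by (intro powr_mono2) auto
    ultimately have "\<bar>w t\<bar> * \<bar>h t powr \<gamma>\<bar> \<le> M * Bd powr \<gamma>"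
      by (intro mult_mono) auto
    thus "\<bar>w t * h t powr \<gamma>\<bar> \<le> M * Bd powr \<gamma>" by (simp add: abs_mult)
  qed
qed

lemma wint_sub:
  assumes "continuous_on {a..b} w" "a \<le> u" "v \<le> b" "\<gamma> \<ge> 0"
  shows "(\<lambda>t. w t * h t powr \<gamma>) integrable_on {u..v}"
  by (rule integrable_on_subinterval[OF wint[OF assms(1,4)]]) (use assms in auto)

lemma hint: "a \<le> u \<Longrightarrow> v \<le> b \<Longrightarrow> \<gamma> \<ge> 0 \<Longrightarrow> (\<lambda>t. h t powr \<gamma>) integrable_on {u..v}"
  using wint_sub[of "\<lambda>_. 1"] by simp

lemma tint: "a \<le> u \<Longrightarrow> v \<le> b \<Longrightarrow> \<gamma> \<ge> 0 \<Longrightarrow> (\<lambda>t. (c1 + c2 * t) * h t powr \<gamma>) integrable_on {u..v}"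
  by (rule wint_sub) (auto intro!: continuous_intros)

lemma min_mid:
  assumes "a \<le> u" "u < v" "v \<le> b" "u \<le> t" "t \<le> v"
  shows "h t \<ge> min (h u) (h v)"
proof -
  have "(v - u) * h t \<ge> (v - t) * h u + (t - u) * h v" by (rule chord) (use assms in auto)
  moreover have "(v - t) * h u + (t - u) * h v \<ge> (v - t) * min (h u) (h v) + (t - u) * min (h u) (h v)"
    using assms by (intro add_mono mult_left_mono) auto
  ultimately have "(v - u) * h t \<ge> (v - u) * min (h u) (h v)" by (simp add: algebra_simps)
  thus ?thesis using assms by simp
qed

lemma pos_int_gen:
  fixes f :: "real \<Rightarrow> real"
  assumes "f integrable_on {u..v}" "\<And>t. t \<in> {u..v} \<Longrightarrow> f t \<ge> 0"
    and "u \<le> u'" "u' < v'" "v' \<le> v" "\<And>t. t \<in> {u'..v'} \<Longrightarrow> f t \<ge> e" "e > 0"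
  shows "integral {u..v} f > 0"
proof -
  have i2: "f integrable_on {u'..v'}" by (rule integrable_on_subinterval[OF assms(1)]) (use assms in auto)
  have "integral {u'..v'} (\<lambda>_. e) \<le> integral {u'..v'} f"
    by (rule integral_le[OF _ i2]) (use assms in auto)
  moreover have "integral {u'..v'} f \<le> integral {u..v} f"
    by (rule integral_subset_le[OF _ i2 assms(1)]) (use assms in auto)
  moreover have "integral {u'..v'} (\<lambda>_. e) > 0" using assms by simp
  ultimately show ?thesis by linarith
qed

lemma pos_int:
  assumes "a \<le> u" "u < v" "v \<le> b" "\<gamma> > 0"
  shows "integral {u..v} (\<lambda>t. h t powr \<gamma>) > 0"
proof -
  define u' where "u' = (2 * u + v) / 3"
  define v' where "v' = (u + 2 * v) / 3"
  have uv: "u < u'" "u' < v'" "v' < v" using assms by (auto simp: u'_def v'_def)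
  define m where "m = min (h u') (h v')"
  have m0: "m > 0" using pos[of u'] pos[of v'] uv assms by (auto simp: m_def)
  have g0: "\<gamma> \<ge> 0" using assms by simp
  have mp: "m powr \<gamma> > 0" using m0 by simp
  show ?thesis
  proof (rule pos_int_gen[OF hint[OF assms(1,3) g0] _ _ uv(2) _ _ mp])
    fix t assume "t \<in> {u'..v'}"
    hence "h t \<ge> m" unfolding m_def using uv assms by (intro min_mid) auto
    thus "h t powr \<gamma> \<ge> m powr \<gamma>" using m0 \<open>\<gamma> > 0\<close> by (intro powr_mono2) auto
  qed (use uv m0 in auto)
qed

lemma Tot_pos: "\<gamma> > 0 \<Longrightarrow> Tot \<gamma> > 0"
  unfolding Tot_def using pos_int[of a b] ab by auto

lemma Phi_pos: "\<gamma> > 0 \<Longrightarrow> a \<le> x \<Longrightarrow> x < b \<Longrightarrow> Phi \<gamma> x > 0"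
  unfolding Phi_def using pos_int by auto

lemma Pr_pos: "\<gamma> > 0 \<Longrightarrow> a < x \<Longrightarrow> x \<le> b \<Longrightarrow> Pr \<gamma> x > 0"
  unfolding Pr_def using pos_int by auto

lemma split_tot: "a \<le> x \<Longrightarrow> x \<le> b \<Longrightarrow> \<gamma> \<ge> 0 \<Longrightarrow> Pr \<gamma> x + Phi \<gamma> x = Tot \<gamma>"
  unfolding Pr_def Phi_def Tot_def by (rule Henstock_Kurzweil_Integration.integral_combine) (use hint ab in auto)

lemma Pr_deriv: "x \<in> {a<..<b} \<Longrightarrow> \<gamma> \<ge> 0 \<Longrightarrow> (Pr \<gamma> has_real_derivative h x powr \<gamma>) (at x)"
  unfolding Pr_def[abs_def] by (rule deriv_integral[OF hint hpow_cont]) (use ab in auto)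

lemma Phi_deriv:
  assumes "x \<in> {a<..<b}" "\<gamma> \<ge> 0" shows "(Phi \<gamma> has_real_derivative - (h x powr \<gamma>)) (at x)"
proof -
  have "((\<lambda>y. Tot \<gamma> - Pr \<gamma> y) has_real_derivative 0 - h x powr \<gamma>) (at x)"
    by (intro derivative_intros Pr_deriv assms)
  hence "((\<lambda>y. Tot \<gamma> - Pr \<gamma> y) has_real_derivative - (h x powr \<gamma>)) (at x)" by simp
  thus ?thesis
  proof (rule has_field_derivative_transform_within_open[where S="{a<..<b}"])
    fix y assume "y \<in> {a<..<b}"
    thus "Tot \<gamma> - Pr \<gamma> y = Phi \<gamma> y" using split_tot[of y \<gamma>] assms by simp
  qed (use assms in auto)
qed

lemma Pr_cont: "\<gamma> \<ge> 0 \<Longrightarrow> continuous_on {a..b} (Pr \<gamma>)"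
  unfolding Pr_def[abs_def] by (rule indefinite_integral_continuous_1[OF hint]) auto

lemma Phi_cont: assumes "\<gamma> \<ge> 0" shows "continuous_on {a..b} (Phi \<gamma>)"
proof -
  have "continuous_on {a..b} (\<lambda>y. Tot \<gamma> - Pr \<gamma> y)" by (intro continuous_intros Pr_cont assms)
  thus ?thesis
  proof (rule continuous_on_eq)
    fix x assume "x \<in> {a..b}"
    thus "Tot \<gamma> - Pr \<gamma> x = Phi \<gamma> x" using split_tot[of x \<gamma>] assms by simp
  qed
qed

end


definition "cprim A B (\<gamma>::real) (s::real) = A * s powr (\<gamma>+1) / (\<gamma>+1) + B * s powr (\<gamma>+2) / (\<gamma>+2)"

lemma cprim0[simp]: "cprim A B \<gamma> 0 = 0" by (simp add: cprim_def)

lemma cone_int: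
  assumes "u \<le> v" "v \<le> p" "\<gamma> > 0"
  shows "((\<lambda>t. (A + B * (p - t)) * (p - t) powr \<gamma>) has_integral
           (cprim A B \<gamma> (p - u) - cprim A B \<gamma> (p - v))) {u..v}"
proof -
  define F where "F t = - cprim A B \<gamma> (p - t)" for t
  have "((\<lambda>t. (A + B * (p - t)) * (p - t) powr \<gamma>) has_integral (F v - F u)) {u..v}"
  proof (rule fundamental_theorem_of_calculus_interior[OF assms(1)])
    show "continuous_on {u..v} F"
      unfolding F_def cprim_def
      by (intro continuous_intros continuous_on_powr') (use assms in auto)
    fix t assume t: "t \<in> {u<..<v}"
    hence pt: "p - t > 0" using assms by auto
    have d1: "DERIV (\<lambda>t. (p - t) powr (\<gamma>+1)) t :> (\<gamma>+1) * (p - t) powr (\<gamma> + 1 - of_nat 1) * (-1)"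
      by (rule DERIV_fun_powr) (use pt in \<open>auto intro!: derivative_eq_intros\<close>)
    have d2: "DERIV (\<lambda>t. (p - t) powr (\<gamma>+2)) t :> (\<gamma>+2) * (p - t) powr (\<gamma> + 2 - of_nat 1) * (-1)"
      by (rule DERIV_fun_powr) (use pt in \<open>auto intro!: derivative_eq_intros\<close>)
    have e1: "(p - t) powr (\<gamma> + 1 - of_nat 1) = (p - t) powr \<gamma>" by simp
    have e2: "(p - t) powr (\<gamma> + 2 - of_nat 1) = (p - t) * (p - t) powr \<gamma>"
      using pt by (simp add: powr_add add.commute)
    have "DERIV F t :> - (A * ((\<gamma>+1) * (p - t) powr (\<gamma> + 1 - of_nat 1) * (-1)) / (\<gamma>+1)
                 + B * ((\<gamma>+2) * (p - t) powr (\<gamma> + 2 - of_nat 1) * (-1)) / (\<gamma>+2))"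
      unfolding F_def[abs_def] cprim_def
      by (intro derivative_intros DERIV_cdivide DERIV_cmult d1 d2)
    moreover have "- (A * ((\<gamma>+1) * (p - t) powr (\<gamma> + 1 - of_nat 1) * (-1)) / (\<gamma>+1)
                 + B * ((\<gamma>+2) * (p - t) powr (\<gamma> + 2 - of_nat 1) * (-1)) / (\<gamma>+2))
          = (A + B * (p - t)) * (p - t) powr \<gamma>"
    proof -
      have g1: "\<gamma>+1 \<noteq> 0" "\<gamma>+2 \<noteq> 0" using assms by auto
      have f1: "\<And>P. A * ((\<gamma>+1) * P * (-1)) / (\<gamma>+1) = - (A * P)" using g1 by (simp add: field_simps)
      have f2: "\<And>P. B * ((\<gamma>+2) * P * (-1)) / (\<gamma>+2) = - (B * P)" using g1 by (simp add: field_simps)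
      show ?thesis unfolding e1 e2 f1 f2 by (simp add: algebra_simps)
    qed
    ultimately show "(F has_vector_derivative (A + B * (p - t)) * (p - t) powr \<gamma>) (at t)"
      by (simp add: has_real_derivative_iff_has_vector_derivative)
  qed
  thus ?thesis by (simp add: F_def)
qed

lemma pw:
  fixes \<gamma> \<delta> \<kappa> u v :: real
  assumes "0 < \<gamma>" "\<gamma> \<le> \<delta>" "0 \<le> \<kappa>" "0 \<le> v" "0 \<le> u"
    and "(\<kappa> \<le> v \<and> v \<le> u) \<or> (u \<le> v \<and> v \<le> \<kappa>)"
  shows "v powr \<delta> - (\<delta>/\<gamma>) * \<kappa> powr (\<delta>-\<gamma>) * v powr \<gamma> \<le> u powr \<delta> - (\<delta>/\<gamma>) * \<kappa> powr (\<delta>-\<gamma>) * u powr \<gamma>"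
proof -
  define c0 where "c0 = (\<delta>/\<gamma>) * \<kappa> powr (\<delta>-\<gamma>)"
  define F where "F z = z powr \<delta> - c0 * z powr \<gamma>" for z
  have dF: "DERIV F z :> \<delta> * z powr (\<gamma> - 1) * (z powr (\<delta> - \<gamma>) - \<kappa> powr (\<delta> - \<gamma>))" if z: "z > 0" for z
  proof -
    have "DERIV F z :> \<delta> * z powr (\<delta> - of_nat 1) * 1 - c0 * (\<gamma> * z powr (\<gamma> - of_nat 1) * 1)"
      unfolding F_def[abs_def]
      by (intro derivative_intros DERIV_cmult DERIV_fun_powr DERIV_ident z)
    moreover have "\<delta> * z powr (\<delta> - of_nat 1) * 1 - c0 * (\<gamma> * z powr (\<gamma> - of_nat 1) * 1)
        = \<delta> * z powr (\<gamma> - 1) * (z powr (\<delta> - \<gamma>) - \<kappa> powr (\<delta> - \<gamma>))"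
    proof -
      have "z powr (\<delta> - 1) = z powr (\<gamma> - 1) * z powr (\<delta> - \<gamma>)"
        using z by (simp add: powr_add[symmetric])
      moreover have "c0 * \<gamma> = \<delta> * \<kappa> powr (\<delta>-\<gamma>)" using assms by (simp add: c0_def)
      ultimately show ?thesis by (simp add: algebra_simps)
    qed
    ultimately show ?thesis by simp
  qed
  have cF: "continuous_on {s..t} F" if "0 \<le> s" for s t
    unfolding F_def by (intro continuous_intros continuous_on_powr') (use that assms in auto)
  from assms(6) show ?thesis
  proof
    assume A: "\<kappa> \<le> v \<and> v \<le> u"
    have "F v \<le> F u"
    proof (rule DERIV_nonneg_imp_increasing_open[OF _ _ cF])
      fix z assume z: "v < z" "z < u"
      have zp: "z > 0" using z A assms by auto
      have "\<kappa> powr (\<delta> - \<gamma>) \<le> z powr (\<delta> - \<gamma>)" using A z assms by (intro powr_mono2) auto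
      hence "\<delta> * z powr (\<gamma> - 1) * (z powr (\<delta> - \<gamma>) - \<kappa> powr (\<delta> - \<gamma>)) \<ge> 0"
        using assms by (intro mult_nonneg_nonneg) auto
      thus "\<exists>y. DERIV F z :> y \<and> 0 \<le> y" using dF[OF zp] by blast
    qed (use A assms in auto)
    thus ?thesis by (simp add: F_def c0_def)
  next
    assume A: "u \<le> v \<and> v \<le> \<kappa>"
    have "(\<lambda>z. - F z) u \<le> (\<lambda>z. - F z) v"
    proof (rule DERIV_nonneg_imp_increasing_open[of u v "\<lambda>z. - F z"])
      fix z assume z: "u < z" "z < v"
      have zp: "z > 0" using z A assms by auto
      have "z powr (\<delta> - \<gamma>) \<le> \<kappa> powr (\<delta> - \<gamma>)" using A z assms by (intro powr_mono2) auto
      hence "- (\<delta> * z powr (\<gamma> - 1) * (z powr (\<delta> - \<gamma>) - \<kappa> powr (\<delta> - \<gamma>))) \<ge> 0"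
        using assms by (simp add: mult_nonneg_nonpos)
      thus "\<exists>y. DERIV (\<lambda>z. - F z) z :> y \<and> 0 \<le> y" using DERIV_minus[OF dF[OF zp]] by blast
    next
      show "continuous_on {u..v} (\<lambda>z. - F z)" by (intro continuous_intros cF) (use assms in auto)
    qed (use A in auto)
    thus ?thesis by (simp add: F_def c0_def)
  qed
qed



lemma cone_int0:
  fixes u v p \<gamma> :: real
  assumes "u \<le> v" "v \<le> p" "\<gamma> > 0"
  shows "((\<lambda>t. (p - t) powr \<gamma>) has_integral
           (((p - u) powr (\<gamma>+1) - (p - v) powr (\<gamma>+1)) / (\<gamma>+1))) {u..v}"
  using cone_int[OF assms, of 1 0] by (simp add: cprim_def diff_divide_distrib)

lemma cone_intc:
  fixes u v p \<gamma> C :: real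
  assumes "u \<le> v" "v \<le> p" "\<gamma> > 0"
  shows "((\<lambda>t. C * (p - t) powr \<gamma>) has_integral
           (C * (((p - u) powr (\<gamma>+1) - (p - v) powr (\<gamma>+1)) / (\<gamma>+1)))) {u..v}"
  using has_integral_mult_right[OF cone_int0[OF assms]] by simp

lemma powalg:
  fixes H G e :: real assumes "H > 0" "G > 0"
  shows "(H/G) powr e * G powr (e+1) = H powr e * G"
    and "(H/G) powr e * G powr (e+2) = H powr e * G^2"
  using assms by (simp_all add: powr_divide powr_add power2_eq_square)

context cf begin

definition "GG \<gamma> x = (\<gamma>+1) * Phi \<gamma> x / h x powr \<gamma>"

lemma GG_pos: "\<gamma> > 0 \<Longrightarrow> a < x \<Longrightarrow> x < b \<Longrightarrow> GG \<gamma> x > 0"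
  unfolding GG_def using Phi_pos[of \<gamma> x] pos[of x] by simp

lemma Phi_GG: "\<gamma> > 0 \<Longrightarrow> a < x \<Longrightarrow> x < b \<Longrightarrow> Phi \<gamma> x = h x powr \<gamma> * GG \<gamma> x / (\<gamma>+1)"
proof -
  assume a: "\<gamma> > 0" "a < x" "x < b"
  have q: "h x powr \<gamma> \<noteq> 0" using pos[of x] a by simp
  have g1: "\<gamma> + 1 \<noteq> 0" using a by simp
  have "h x powr \<gamma> * ((\<gamma>+1) * Phi \<gamma> x / h x powr \<gamma>) = (\<gamma>+1) * Phi \<gamma> x" using q by simp
  thus ?thesis unfolding GG_def using g1 by (simp add: mult.assoc)
qed

lemma cone_total:
  assumes "\<gamma> > 0" "a < x" "x < b" "x \<le> v" "v \<le> x + GG \<gamma> x"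
  shows "((\<lambda>t. (h x / GG \<gamma> x) powr \<gamma> * (x + GG \<gamma> x - t) powr \<gamma>) has_integral
     (Phi \<gamma> x - (h x / GG \<gamma> x) powr \<gamma> * (x + GG \<gamma> x - v) powr (\<gamma>+1) / (\<gamma>+1))) {x..v}"
proof -
  let ?H = "h x" and ?G = "GG \<gamma> x"
  have H: "?H > 0" using pos assms by auto
  have G: "?G > 0" using GG_pos assms by auto
  have "(?H/?G) powr \<gamma> * ((x + ?G - x) powr (\<gamma>+1) - (x + ?G - v) powr (\<gamma>+1)) / (\<gamma>+1)
      = ((?H/?G) powr \<gamma> * ?G powr (\<gamma>+1)) / (\<gamma>+1) - (?H/?G) powr \<gamma> * (x + ?G - v) powr (\<gamma>+1) / (\<gamma>+1)"
    by (simp add: algebra_simps diff_divide_distrib)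
  also have "\<dots> = Phi \<gamma> x - (?H/?G) powr \<gamma> * (x + ?G - v) powr (\<gamma>+1) / (\<gamma>+1)"
    unfolding powalg(1)[OF H G] using Phi_GG assms by simp
  finally show ?thesis using cone_intc[of x v "x + ?G" \<gamma> "(?H/?G) powr \<gamma>"] assms by simp
qed

lemma CL0:
  assumes g: "\<gamma> > 0" and x: "a < x" "x < b"
  shows "GG \<gamma> x \<ge> b - x"
proof (rule ccontr)
  assume "\<not> GG \<gamma> x \<ge> b - x"
  define H where "H = h x"
  define G where "G = GG \<gamma> x"
  define p where "p = x + G"
  define K where "K t = H * (p - t) / G" for t
  have H: "H > 0" using pos x by (auto simp: H_def)
  have G: "G > 0" using GG_pos g x by (auto simp: G_def)
  have pb: "p < b" using \<open>\<not> GG \<gamma> x \<ge> b - x\<close> by (simp add: p_def G_def)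
  have xp: "x < p" using G by (simp add: p_def)
  have Kaff: "(b - x) * K t = (b - t) * K x + (t - x) * K b" for t
  proof -
    have e: "(b - x) * (H * (p - t)) = (b - t) * (H * (p - x)) + (t - x) * (H * (p - b))" by algebra
    have "(b - x) * (H * (p - t)) / G = ((b - t) * (H * (p - x)) + (t - x) * (H * (p - b))) / G"
      by (simp only: e)
    thus ?thesis unfolding K_def by (simp add: add_divide_distrib)
  qed
  have Kx: "K x = H" using G by (simp add: K_def p_def)
  have Kb: "K b < 0" using H G pb by (simp add: K_def divide_neg_pos mult_pos_neg)
  have hK: "h t \<ge> K t" if t: "t \<in> {x..b}" for t
  proof (cases "t = b")
    case True thus ?thesis using Kb nn[of b] ab by auto
  next
    case False
    have "(b - x) * h t \<ge> (b - t) * h x + (t - x) * h b" by (rule chord) (use t x False in auto)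
    moreover have "(t - x) * h b \<ge> (t - x) * K b" using t Kb nn[of b] ab by (intro mult_left_mono) auto
    ultimately have "(b - x) * h t \<ge> (b - x) * K t" unfolding Kaff Kx H_def by linarith
    thus ?thesis using x by simp
  qed
  have "integral {x..p} (\<lambda>t. (H/G) powr \<gamma> * (p - t) powr \<gamma>) \<le> integral {x..p} (\<lambda>t. h t powr \<gamma>)"
  proof (rule integral_le)
    show "(\<lambda>t. (H/G) powr \<gamma> * (p - t) powr \<gamma>) integrable_on {x..p}"
      using cone_intc[of x p p \<gamma>] xp g by auto
    show "(\<lambda>t. h t powr \<gamma>) integrable_on {x..p}" by (rule hint) (use x pb g in auto)
    fix t assume t: "t \<in> {x..p}"
    have "(H/G) powr \<gamma> * (p - t) powr \<gamma> = K t powr \<gamma>"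
      unfolding K_def using H G t by (simp add: powr_mult[symmetric] field_simps)
    also have "\<dots> \<le> h t powr \<gamma>"
      using hK[of t] t pb H G g unfolding K_def by (intro powr_mono2) auto
    finally show "(H/G) powr \<gamma> * (p - t) powr \<gamma> \<le> h t powr \<gamma>" .
  qed
  moreover have "integral {x..p} (\<lambda>t. (H/G) powr \<gamma> * (p - t) powr \<gamma>) = Phi \<gamma> x"
  proof -
    have "((\<lambda>t. (H/G) powr \<gamma> * (x + G - t) powr \<gamma>) has_integral
       (Phi \<gamma> x - (H/G) powr \<gamma> * (x + G - p) powr (\<gamma>+1) / (\<gamma>+1))) {x..p}"
      using cone_total[of \<gamma> x p] g x xp unfolding H_def G_def p_def by simp
    hence "((\<lambda>t. (H/G) powr \<gamma> * (p - t) powr \<gamma>) has_integral Phi \<gamma> x) {x..p}"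
      by (simp add: p_def)
    thus ?thesis by (rule integral_unique)
  qed
  moreover have "integral {x..p} (\<lambda>t. h t powr \<gamma>) + integral {p..b} (\<lambda>t. h t powr \<gamma>) = Phi \<gamma> x"
    unfolding Phi_def by (rule Henstock_Kurzweil_Integration.integral_combine) (use xp pb x g hint in auto)
  moreover have "integral {p..b} (\<lambda>t. h t powr \<gamma>) > 0" by (rule pos_int) (use xp pb x g in auto)
  ultimately show False by linarith
qed

end


context cf begin

lemma Kpow:
  fixes H G p t e :: real
  assumes "H > 0" "G > 0" "t \<le> p"
  shows "(H * (p - t) / G) powr e = (H/G) powr e * (p - t) powr e"
proof -
  have e: "H * (p - t) / G = (H/G) * (p - t)" by (simp add: divide_inverse ac_simps)
  show ?thesis unfolding e using assms by (intro powr_mult)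
qed

lemma CL1:
  assumes g: "\<gamma> > 0" and x: "a < x" "x < b" and t0: "t0 \<in> {a..x}"
  shows "h t0 \<le> h x * (x + GG \<gamma> x - t0) / GG \<gamma> x"
proof (rule ccontr)
  define H where "H = h x"
  define G where "G = GG \<gamma> x"
  define p where "p = x + G"
  define K where "K t = H * (p - t) / G" for t
  assume "\<not> h t0 \<le> h x * (x + GG \<gamma> x - t0) / GG \<gamma> x"
  hence bad: "h t0 > K t0" by (simp add: K_def H_def G_def p_def)
  have H: "H > 0" using pos x by (auto simp: H_def)
  have G: "G > 0" using GG_pos g x by (auto simp: G_def)
  have pb: "p \<ge> b" using CL0[OF g x] by (simp add: p_def G_def)
  have Kx: "K x = H" using G by (simp add: K_def p_def)
  have t0x: "t0 < x" using bad Kx t0 by (cases "t0 = x") (auto simp: H_def)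
  have Kaff: "(s - t0) * K x = (s - x) * K t0 + (x - t0) * K s" for s
  proof -
    have e: "(s - t0) * (H * (p - x)) = (s - x) * (H * (p - t0)) + (x - t0) * (H * (p - s))" by algebra
    have "(s - t0) * (H * (p - x)) / G = ((s - x) * (H * (p - t0)) + (x - t0) * (H * (p - s))) / G"
      by (simp only: e)
    thus ?thesis unfolding K_def by (simp add: add_divide_distrib)
  qed
  have less: "h s < K s" if s: "s \<in> {x<..b}" for s
  proof -
    have "(s - t0) * h x \<ge> (s - x) * h t0 + (x - t0) * h s" by (rule chord) (use s t0 t0x in auto)
    moreover have "(s - x) * h t0 > (s - x) * K t0" using s bad by (intro mult_strict_left_mono) auto
    ultimately have "(x - t0) * h s < (x - t0) * K s" using Kaff[of s, unfolded Kx H_def] by linarith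
    thus ?thesis using t0x by simp
  qed
  show False
  proof (cases "p = b")
    case True
    have "h b < K b" using less[of b] x by auto
    moreover have "K b = 0" using True by (simp add: K_def)
    ultimately show False using nn[of b] ab by auto
  next
    case False
    hence pb': "p > b" using pb by simp
    have "integral {x..b} (\<lambda>t. h t powr \<gamma>) \<le> integral {x..b} (\<lambda>t. (H/G) powr \<gamma> * (p - t) powr \<gamma>)"
    proof (rule integral_le)
      show "(\<lambda>t. h t powr \<gamma>) integrable_on {x..b}" by (rule hint) (use x g in auto)
      show "(\<lambda>t. (H/G) powr \<gamma> * (p - t) powr \<gamma>) integrable_on {x..b}"
        using cone_intc[of x b p \<gamma>] x pb g by auto
      fix t assume t: "t \<in> {x..b}"
      have "h t \<le> K t" using less[of t] t Kx by (cases "t = x") (auto simp: H_def)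
      hence "h t powr \<gamma> \<le> K t powr \<gamma>" using nn[of t] t x g by (intro powr_mono2) auto
      also have "K t powr \<gamma> = (H/G) powr \<gamma> * (p - t) powr \<gamma>"
        unfolding K_def by (rule Kpow) (use H G t pb in auto)
      finally show "h t powr \<gamma> \<le> (H/G) powr \<gamma> * (p - t) powr \<gamma>" .
    qed
    moreover have "integral {x..b} (\<lambda>t. (H/G) powr \<gamma> * (p - t) powr \<gamma>)
        = Phi \<gamma> x - (H/G) powr \<gamma> * (p - b) powr (\<gamma>+1) / (\<gamma>+1)"
      using cone_total[of \<gamma> x b] g x pb unfolding H_def G_def p_def by (auto dest: integral_unique)
    moreover have "(H/G) powr \<gamma> * (p - b) powr (\<gamma>+1) / (\<gamma>+1) > 0" using H G pb' g by simp
    ultimately show False unfolding Phi_def by linarith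
  qed
qed

lemma cross:
  assumes g: "\<gamma> > 0" and x: "a < x" "x < b"
  defines "K \<equiv> \<lambda>t. h x * (x + GG \<gamma> x - t) / GG \<gamma> x"
  shows "\<exists>x1\<in>{x..b}. (\<forall>t\<in>{x..b}. t < x1 \<longrightarrow> h t \<ge> K t) \<and> (\<forall>t\<in>{x..b}. x1 < t \<longrightarrow> h t \<le> K t)"
proof -
  define S where "S = {s \<in> {x..b}. h s \<ge> K s}"
  have G: "GG \<gamma> x > 0" using GG_pos g x by auto
  have xS: "x \<in> S" using x G by (simp add: S_def K_def)
  have bdd: "bdd_above S" by (rule bdd_aboveI[of _ b]) (auto simp: S_def)
  define x1 where "x1 = Sup S"
  have x1: "x1 \<in> {x..b}"
    using xS bdd by (auto simp: x1_def S_def intro!: cSup_upper cSup_least)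
  have Kaff: "(s - x) * K t = (s - t) * K x + (t - x) * K s" for s t
  proof -
    have e: "(s - x) * (h x * (x + GG \<gamma> x - t)) = (s - t) * (h x * (x + GG \<gamma> x - x))
          + (t - x) * (h x * (x + GG \<gamma> x - s))" by algebra
    have "(s - x) * (h x * (x + GG \<gamma> x - t)) / GG \<gamma> x = ((s - t) * (h x * (x + GG \<gamma> x - x))
          + (t - x) * (h x * (x + GG \<gamma> x - s))) / GG \<gamma> x"
      by (simp only: e)
    thus ?thesis unfolding K_def by (simp add: add_divide_distrib)
  qed
  have Kx: "K x = h x" using G by (simp add: K_def)
  have A: "h t \<ge> K t" if t: "t \<in> {x..b}" "t < x1" for t
  proof -
    obtain s where s: "s \<in> S" "t < s" using less_cSup_iff[of S t] xS bdd t by (auto simp: x1_def)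
    have "(s - x) * h t \<ge> (s - t) * h x + (t - x) * h s"
      by (rule chord) (use s t x in \<open>auto simp: S_def\<close>)
    moreover have "(t - x) * h s \<ge> (t - x) * K s" using s t by (intro mult_left_mono) (auto simp: S_def)
    ultimately have "(s - x) * h t \<ge> (s - x) * K t" using Kaff[of s t, unfolded Kx] by linarith
    thus ?thesis using s t by (simp add: S_def)
  qed
  have B: "h t \<le> K t" if t: "t \<in> {x..b}" "x1 < t" for t
  proof (rule ccontr)
    assume "\<not> h t \<le> K t"
    hence "t \<in> S" using t by (auto simp: S_def)
    hence "t \<le> x1" unfolding x1_def using bdd by (rule cSup_upper)
    thus False using t by simp
  qed
  show ?thesis using x1 A B by blast
qed

end


context cf begin

lemma hint_has: "a \<le> u \<Longrightarrow> v \<le> b \<Longrightarrow> \<gamma> \<ge> 0 \<Longrightarrow>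
   ((\<lambda>t. h t powr \<gamma>) has_integral integral {u..v} (\<lambda>t. h t powr \<gamma>)) {u..v}"
  using hint by blast

lemma CL4:
  assumes g: "\<gamma> > 0" and x: "a < x" "x < b" and gd: "\<gamma> \<le> \<delta>"
  shows "Phi \<delta> x \<ge> h x powr \<delta> * GG \<gamma> x / (\<delta>+1)"
proof -
  define H where "H = h x"
  define G where "G = GG \<gamma> x"
  define p where "p = x + G"
  define K where "K t = H * (p - t) / G" for t
  have H: "H > 0" using pos x by (auto simp: H_def)
  have G: "G > 0" using GG_pos g x by (auto simp: G_def)
  have pb: "p \<ge> b" using CL0[OF g x] by (simp add: p_def G_def)
  have d: "\<delta> > 0" using g gd by simp
  obtain x1 where x1: "x1 \<in> {x..b}" and A: "\<And>t. t\<in>{x..b} \<Longrightarrow> t < x1 \<Longrightarrow> h t \<ge> K t"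
     and B: "\<And>t. t\<in>{x..b} \<Longrightarrow> x1 < t \<Longrightarrow> h t \<le> K t"
    using cross[OF g x] unfolding K_def H_def G_def p_def by blast
  define \<kappa> where "\<kappa> = K x1"
  have \<kappa>0: "\<kappa> \<ge> 0" using x1 pb H G by (auto simp: \<kappa>_def K_def)
  define c0 where "c0 = (\<delta>/\<gamma>) * \<kappa> powr (\<delta>-\<gamma>)"
  define Q where "Q e s = (H/G) powr e * s powr (e+1) / (e+1)" for e s
  have Kmono: "K s \<le> K t" if "t \<le> s" for s t using that H G by (auto simp: K_def divide_right_mono)
  have Kp: "K t powr e = (H/G) powr e * (p - t) powr e" if "t \<le> p" for t e
    unfolding K_def by (rule Kpow) (use H G that in auto)
  have I1: "((\<lambda>t. (H/G) powr e * (p - t) powr e) has_integral (Q e G - Q e (p - b))) {x..b}" if "e > 0" for e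
    using cone_intc[of x b p e "(H/G) powr e"] that x pb by (simp add: Q_def p_def diff_divide_distrib algebra_simps)
  have I2: "((\<lambda>t. (H/G) powr e * (p - t) powr e) has_integral Q e (p - b)) {b..p}" if "e > 0" for e
    using cone_intc[of b p p e "(H/G) powr e"] that pb by (simp add: Q_def)
  have QG: "Q e G = H powr e * G / (e+1)" for e
    unfolding Q_def using powalg(1)[OF H G] by simp
  have Phig: "Phi \<gamma> x = Q \<gamma> G" unfolding QG using Phi_GG[OF g x] by (simp add: H_def G_def)
  have "Q \<delta> G - Q \<delta> (p - b) - c0 * (Q \<gamma> G - Q \<gamma> (p - b)) \<le> Phi \<delta> x - c0 * Phi \<gamma> x"
  proof (rule has_integral_le)
    show "((\<lambda>t. (H/G) powr \<delta> * (p - t) powr \<delta> - c0 * ((H/G) powr \<gamma> * (p - t) powr \<gamma>)) has_integral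
       (Q \<delta> G - Q \<delta> (p - b) - c0 * (Q \<gamma> G - Q \<gamma> (p - b)))) {x..b}"
      by (intro has_integral_diff has_integral_mult_right I1 g d)
    show "((\<lambda>t. h t powr \<delta> - c0 * h t powr \<gamma>) has_integral (Phi \<delta> x - c0 * Phi \<gamma> x)) {x..b}"
      unfolding Phi_def by (intro has_integral_diff has_integral_mult_right hint_has) (use x g d in auto)
    fix t assume t: "t \<in> {x..b}"
    have tp: "t \<le> p" using t pb by auto
    have "K t powr \<delta> - c0 * K t powr \<gamma> \<le> h t powr \<delta> - c0 * h t powr \<gamma>"
      unfolding c0_def
    proof (rule pw[OF g gd \<kappa>0])
      show "0 \<le> K t" using tp H G by (simp add: K_def)
      show "0 \<le> h t" using t x by (intro nn) auto
      show "\<kappa> \<le> K t \<and> K t \<le> h t \<or> h t \<le> K t \<and> K t \<le> \<kappa>"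
      proof (cases "t < x1")
        case True thus ?thesis using A[OF t] Kmono[of t x1] by (auto simp: \<kappa>_def)
      next
        case False
        show ?thesis
        proof (cases "t = x1")
          case True thus ?thesis by (auto simp: \<kappa>_def)
        next
          case False
          hence "x1 < t" using \<open>\<not> t < x1\<close> by simp
          thus ?thesis using B[OF t] Kmono[of x1 t] by (auto simp: \<kappa>_def)
        qed
      qed
    qed
    thus "(H/G) powr \<delta> * (p - t) powr \<delta> - c0 * ((H/G) powr \<gamma> * (p - t) powr \<gamma>) \<le> h t powr \<delta> - c0 * h t powr \<gamma>"
      using Kp[OF tp] by simp
  qed
  moreover have "Q \<delta> (p - b) - c0 * Q \<gamma> (p - b) \<le> 0"
  proof -
    have "Q \<delta> (p - b) - c0 * Q \<gamma> (p - b) \<le> integral {b..p} (\<lambda>_. 0::real)"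
    proof (rule has_integral_le)
      show "((\<lambda>t. (H/G) powr \<delta> * (p - t) powr \<delta> - c0 * ((H/G) powr \<gamma> * (p - t) powr \<gamma>)) has_integral
         (Q \<delta> (p - b) - c0 * Q \<gamma> (p - b))) {b..p}"
        by (intro has_integral_diff has_integral_mult_right I2 g d)
      show "((\<lambda>_. 0::real) has_integral integral {b..p} (\<lambda>_. 0::real)) {b..p}" by simp
      fix t assume t: "t \<in> {b..p}"
      have tp: "t \<le> p" using t by auto
      have "K t powr \<delta> - c0 * K t powr \<gamma> \<le> 0 powr \<delta> - c0 * 0 powr \<gamma>"
        unfolding c0_def
      proof (rule pw[OF g gd \<kappa>0])
        have "0 \<le> K t" using tp H G by (simp add: K_def)
        moreover have "K t \<le> \<kappa>" using Kmono[of x1 t] x1 t by (auto simp: \<kappa>_def)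
        ultimately show "\<kappa> \<le> K t \<and> K t \<le> 0 \<or> 0 \<le> K t \<and> K t \<le> \<kappa>" by simp
        show "0 \<le> K t" by fact
      qed auto
      thus "(H/G) powr \<delta> * (p - t) powr \<delta> - c0 * ((H/G) powr \<gamma> * (p - t) powr \<gamma>) \<le> 0"
        using Kp[OF tp] by simp
    qed
    thus ?thesis by simp
  qed
  ultimately have "Q \<delta> G \<le> Phi \<delta> x" using Phig by (simp add: algebra_simps)
  moreover have "Q \<delta> G = h x powr \<delta> * GG \<gamma> x / (\<delta>+1)" using QG[of \<delta>] by (simp add: H_def G_def)
  ultimately show ?thesis by simp
qed

lemma CL3:
  assumes g: "\<gamma> > 0" and x: "a < x" "x < b"
  shows "integral {x..b} (\<lambda>t. (t - x) * h t powr \<gamma>) \<le> Phi \<gamma> x * GG \<gamma> x / (\<gamma>+2)"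
proof -
  define H where "H = h x"
  define G where "G = GG \<gamma> x"
  define p where "p = x + G"
  define K where "K t = H * (p - t) / G" for t
  define c where "c = (H/G) powr \<gamma>"
  have H: "H > 0" using pos x by (auto simp: H_def)
  have G: "G > 0" using GG_pos g x by (auto simp: G_def)
  have pb: "p \<ge> b" using CL0[OF g x] by (simp add: p_def G_def)
  obtain x1 where x1: "x1 \<in> {x..b}" and A: "\<And>t. t\<in>{x..b} \<Longrightarrow> t < x1 \<Longrightarrow> h t \<ge> K t"
     and B: "\<And>t. t\<in>{x..b} \<Longrightarrow> x1 < t \<Longrightarrow> h t \<le> K t"
    using cross[OF g x] unfolding K_def H_def G_def p_def by blast
  define Q where "Q s = c * s powr (\<gamma>+1) / (\<gamma>+1)" for s
  define V where "V s = c * cprim G (-1) \<gamma> s" for s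
  have Kp: "K t powr \<gamma> = c * (p - t) powr \<gamma>" if "t \<le> p" for t
    unfolding K_def c_def by (rule Kpow) (use H G that in auto)
  have I1: "((\<lambda>t. c * (p - t) powr \<gamma>) has_integral (Q G - Q (p - b))) {x..b}"
    using cone_intc[of x b p \<gamma> c] g x pb by (simp add: Q_def p_def diff_divide_distrib algebra_simps)
  have I2: "((\<lambda>t. c * (p - t) powr \<gamma>) has_integral Q (p - b)) {b..p}"
    using cone_intc[of b p p \<gamma> c] g pb by (simp add: Q_def)
  have M: "((\<lambda>t. (t - x) * (c * (p - t) powr \<gamma>)) has_integral (V (p - u) - V (p - v))) {u..v}"
    if "u \<le> v" "v \<le> p" for u v
  proof -
    have fi: "((\<lambda>t. c * ((G + (-1) * (p - t)) * (p - t) powr \<gamma>)) has_integral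
        c * (cprim G (-1) \<gamma> (p - u) - cprim G (-1) \<gamma> (p - v))) {u..v}"
      by (intro has_integral_mult_right cone_int that g)
    have "((\<lambda>t. (t - x) * (c * (p - t) powr \<gamma>)) has_integral
        c * (cprim G (-1) \<gamma> (p - u) - cprim G (-1) \<gamma> (p - v))) {u..v}"
      by (rule has_integral_eq[OF _ fi]) (simp add: p_def algebra_simps)
    thus ?thesis by (simp add: V_def right_diff_distrib)
  qed
  have QG: "Q G = Phi \<gamma> x"
    unfolding Q_def c_def using powalg(1)[OF H G, of \<gamma>] Phi_GG[OF g x] by (simp add: H_def G_def)
  have VG: "V G = Phi \<gamma> x * G / (\<gamma>+2)"
  proof -
    have e1: "G * G powr (\<gamma>+1) = G powr (\<gamma>+2)"
    proof -
      have "G powr ((\<gamma>+1) + 1) = G powr (\<gamma>+1) * G powr 1" by (rule powr_add)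
      moreover have "(\<gamma>+1) + 1 = \<gamma> + 2" by simp
      ultimately show ?thesis using G by simp
    qed
    have "V G = c * G powr (\<gamma>+2) * (1/(\<gamma>+1) - 1/(\<gamma>+2))"
      unfolding V_def cprim_def using e1 by (simp add: algebra_simps diff_divide_distrib)
    also have "c * G powr (\<gamma>+2) = H powr \<gamma> * G^2" unfolding c_def by (rule powalg(2)[OF H G])
    also have "1/(\<gamma>+1) - 1/(\<gamma>+2) = 1/((\<gamma>+1)*(\<gamma>+2))" using g by (simp add: field_simps)
    also have "Phi \<gamma> x = H powr \<gamma> * G / (\<gamma>+1)" using Phi_GG[OF g x] by (simp add: H_def G_def)
    ultimately show ?thesis by (simp add: power2_eq_square)
  qed
  have Q0: "Q (p - b) \<ge> 0" using H G pb g unfolding Q_def c_def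
    by (intro divide_nonneg_pos mult_nonneg_nonneg) auto
  have le1: "integral {x..b} (\<lambda>t. (t - x) * h t powr \<gamma>)
        \<le> (V (p - x) - V (p - b)) + (x1 - x) * (Phi \<gamma> x - (Q G - Q (p - b)))"
  proof (rule has_integral_le)
    show "((\<lambda>t. (t - x) * h t powr \<gamma>) has_integral integral {x..b} (\<lambda>t. (t - x) * h t powr \<gamma>)) {x..b}"
    proof -
      have "continuous_on {a..b} (\<lambda>t. t - x)" by (intro continuous_intros)
      hence "(\<lambda>t. (t - x) * h t powr \<gamma>) integrable_on {x..b}"
        using wint_sub[of "\<lambda>t. t - x" x b \<gamma>] x g by auto
      thus ?thesis by blast
    qed
    show "((\<lambda>t. (t - x) * (c * (p - t) powr \<gamma>) + (x1 - x) * (h t powr \<gamma> - c * (p - t) powr \<gamma>)) has_integral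
        (V (p - x) - V (p - b)) + (x1 - x) * (Phi \<gamma> x - (Q G - Q (p - b)))) {x..b}"
      unfolding Phi_def
      by (intro has_integral_add has_integral_mult_right has_integral_diff M I1 hint_has) (use x pb g in auto)
    fix t assume t: "t \<in> {x..b}"
    have tp: "t \<le> p" using t pb by auto
    have K0: "K t \<ge> 0" using tp H G by (simp add: K_def)
    have "(t - x1) * (c * (p - t) powr \<gamma> - h t powr \<gamma>) \<ge> 0"
    proof (cases "t < x1")
      case True
      have "h t powr \<gamma> \<ge> K t powr \<gamma>" using A[OF t True] K0 g by (intro powr_mono2) auto
      thus ?thesis using True Kp[OF tp] by (intro mult_nonpos_nonpos) auto
    next
      case False
      show ?thesis
      proof (cases "t = x1")
        case True thus ?thesis by simp
      next
        case False2: False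
        have "h t \<le> K t" using B[OF t] False False2 by auto
        hence "h t powr \<gamma> \<le> K t powr \<gamma>" using nn[of t] t x g by (intro powr_mono2) auto
        thus ?thesis using False Kp[OF tp] by (intro mult_nonneg_nonneg) auto
      qed
    qed
    moreover have "(t - x) * (c * (p - t) powr \<gamma>) + (x1 - x) * (h t powr \<gamma> - c * (p - t) powr \<gamma>)
       - (t - x) * h t powr \<gamma> = (t - x1) * (c * (p - t) powr \<gamma> - h t powr \<gamma>)"
      by (simp add: algebra_simps)
    ultimately show "(t - x) * h t powr \<gamma> \<le> (t - x) * (c * (p - t) powr \<gamma>) + (x1 - x) * (h t powr \<gamma> - c * (p - t) powr \<gamma>)"
      by linarith
  qed
  have le2: "(b - x) * Q (p - b) \<le> V (p - b) - V (p - p)"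
  proof (rule has_integral_le)
    show "((\<lambda>t. (b - x) * (c * (p - t) powr \<gamma>)) has_integral (b - x) * Q (p - b)) {b..p}"
      by (intro has_integral_mult_right I2)
    show "((\<lambda>t. (t - x) * (c * (p - t) powr \<gamma>)) has_integral (V (p - b) - V (p - p))) {b..p}"
      by (rule M) (use pb in auto)
    fix t assume "t \<in> {b..p}"
    thus "(b - x) * (c * (p - t) powr \<gamma>) \<le> (t - x) * (c * (p - t) powr \<gamma>)"
      using H G by (intro mult_right_mono) (auto simp: c_def)
  qed
  have "(x1 - x) * Q (p - b) \<le> (b - x) * Q (p - b)" using x1 Q0 by (intro mult_right_mono) auto
  moreover have "V (p - p) = 0" by (simp add: V_def)
  moreover have "p - x = G" by (simp add: p_def)
  ultimately have "integral {x..b} (\<lambda>t. (t - x) * h t powr \<gamma>) \<le> V G"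
    using le1 le2 QG by (simp add: algebra_simps)
  thus ?thesis using VG by (simp add: G_def)
qed

end


context cf begin

abbreviation "gg \<gamma> \<equiv> g_alpha \<gamma> a b h"

lemma weighted_pos:
  assumes g: "\<gamma> > 0" and w: "continuous_on {a..b} w" "\<And>t. t \<in> {a..b} \<Longrightarrow> w t \<ge> 0"
    and e: "\<epsilon> > 0" "\<And>t. t \<in> {(2*a+b)/3..(a+2*b)/3} \<Longrightarrow> w t \<ge> \<epsilon>"
  shows "integral {a..b} (\<lambda>t. w t * h t powr \<gamma>) > 0"
proof -
  define u' where "u' = (2*a+b)/3"
  define v' where "v' = (a+2*b)/3"
  have uv: "a < u'" "u' < v'" "v' < b" using ab by (auto simp: u'_def v'_def)
  define m where "m = min (h u') (h v')"
  have m0: "m > 0" using pos[of u'] pos[of v'] uv by (auto simp: m_def)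
  show ?thesis
  proof (rule pos_int_gen[OF wint[OF w(1)] _ _ uv(2) _ _ mult_pos_pos[OF e(1) powr_gt_zero[THEN iffD2]]])
    show "0 \<le> \<gamma>" using g by simp
    fix t assume t: "t \<in> {u'..v'}"
    hence "h t \<ge> m" unfolding m_def using uv by (intro min_mid) auto
    hence "h t powr \<gamma> \<ge> m powr \<gamma>" using m0 g by (intro powr_mono2) auto
    moreover have "w t \<ge> \<epsilon>" using e(2) t by (auto simp: u'_def v'_def)
    ultimately show "w t * h t powr \<gamma> \<ge> \<epsilon> * m powr \<gamma>" using e m0 by (intro mult_mono) auto
  next
    fix t assume "t \<in> {a..b}"
    thus "w t * h t powr \<gamma> \<ge> 0" using w(2) by simp
  qed (use uv m0 in auto)
qed

lemma tint_has: "a \<le> u \<Longrightarrow> v \<le> b \<Longrightarrow> \<gamma> \<ge> 0 \<Longrightarrow>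
   ((\<lambda>t. (c1 + c2 * t) * h t powr \<gamma>) has_integral integral {u..v} (\<lambda>t. (c1 + c2 * t) * h t powr \<gamma>)) {u..v}"
  using tint by blast

lemma Tot_t: "integral {a..b} (\<lambda>t. t * h t powr \<gamma>) = gg \<gamma> * Tot \<gamma>" if "\<gamma> > 0"
  using Tot_pos[OF that] by (simp add: g_alpha_def Tot_def)

lemma gg_in: assumes g: "\<gamma> > 0" shows "a < gg \<gamma>" "gg \<gamma> < b"
proof -
  have T: "Tot \<gamma> > 0" using Tot_pos g by simp
  have i1: "integral {a..b} (\<lambda>t. (t - a) * h t powr \<gamma>) > 0"
    by (rule weighted_pos[OF g, of _ "((2*a+b)/3) - a"]) (use ab in \<open>auto intro!: continuous_intros\<close>)
  have i2: "integral {a..b} (\<lambda>t. (b - t) * h t powr \<gamma>) > 0"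
    by (rule weighted_pos[OF g, of _ "b - ((a+2*b)/3)"]) (use ab in \<open>auto intro!: continuous_intros\<close>)
  have e1: "integral {a..b} (\<lambda>t. (t - a) * h t powr \<gamma>) = (gg \<gamma> - a) * Tot \<gamma>"
  proof -
    have "((\<lambda>t. (-a + 1 * t) * h t powr \<gamma>) has_integral integral {a..b} (\<lambda>t. (-a + 1 * t) * h t powr \<gamma>)) {a..b}"
      by (rule tint_has) (use g in auto)
    moreover have "((\<lambda>t. (-a + 1 * t) * h t powr \<gamma>) has_integral (gg \<gamma> * Tot \<gamma> - a * Tot \<gamma>)) {a..b}"
    proof -
      have "((\<lambda>t. (0 + 1 * t) * h t powr \<gamma> - a * h t powr \<gamma>) has_integral
            (integral {a..b} (\<lambda>t. (0 + 1 * t) * h t powr \<gamma>) - a * Tot \<gamma>)) {a..b}"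
        unfolding Tot_def by (intro has_integral_diff has_integral_mult_right tint_has hint_has) (use g in auto)
      thus ?thesis using Tot_t[OF g] by (simp add: algebra_simps)
    qed
    ultimately show ?thesis by (simp add: algebra_simps integral_unique)
  qed
  have e2: "integral {a..b} (\<lambda>t. (b - t) * h t powr \<gamma>) = (b - gg \<gamma>) * Tot \<gamma>"
  proof -
    have "((\<lambda>t. (b + (-1) * t) * h t powr \<gamma>) has_integral integral {a..b} (\<lambda>t. (b + (-1) * t) * h t powr \<gamma>)) {a..b}"
      by (rule tint_has) (use g in auto)
    moreover have "((\<lambda>t. (b + (-1) * t) * h t powr \<gamma>) has_integral (b * Tot \<gamma> - gg \<gamma> * Tot \<gamma>)) {a..b}"
    proof -
      have "((\<lambda>t. b * h t powr \<gamma> - (0 + 1 * t) * h t powr \<gamma>) has_integral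
            (b * Tot \<gamma> - integral {a..b} (\<lambda>t. (0 + 1 * t) * h t powr \<gamma>))) {a..b}"
        unfolding Tot_def by (intro has_integral_diff has_integral_mult_right tint_has hint_has) (use g in auto)
      thus ?thesis using Tot_t[OF g] by (simp add: algebra_simps)
    qed
    ultimately show ?thesis by (simp add: algebra_simps integral_unique)
  qed
  show "a < gg \<gamma>" using i1 e1 T by (simp add: zero_less_mult_iff)
  show "gg \<gamma> < b" using i2 e2 T by (simp add: zero_less_mult_iff)
qed

end


context cf begin

lemma cen:
  assumes g: "\<gamma> > 0"
  shows "integral {a..gg \<gamma>} (\<lambda>t. (gg \<gamma> - t) * h t powr \<gamma>) = integral {gg \<gamma>..b} (\<lambda>t. (t - gg \<gamma>) * h t powr \<gamma>)"
proof -
  define m where "m = gg \<gamma>"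
  have m: "a < m" "m < b" using gg_in[OF g] by (auto simp: m_def)
  have "((\<lambda>t. (0 + 1 * t) * h t powr \<gamma> - m * h t powr \<gamma>) has_integral
        (integral {a..b} (\<lambda>t. (0 + 1 * t) * h t powr \<gamma>) - m * Tot \<gamma>)) {a..b}"
    unfolding Tot_def by (intro has_integral_diff has_integral_mult_right tint_has hint_has) (use g in auto)
  hence "((\<lambda>t. (-m + 1 * t) * h t powr \<gamma>) has_integral 0) {a..b}"
    using Tot_t[OF g] by (simp add: algebra_simps m_def)
  hence z: "integral {a..b} (\<lambda>t. (-m + 1 * t) * h t powr \<gamma>) = 0" by (rule integral_unique)
  have "integral {a..m} (\<lambda>t. (-m + 1 * t) * h t powr \<gamma>) + integral {m..b} (\<lambda>t. (-m + 1 * t) * h t powr \<gamma>)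
      = integral {a..b} (\<lambda>t. (-m + 1 * t) * h t powr \<gamma>)"
  proof (rule Henstock_Kurzweil_Integration.integral_combine)
    show "(\<lambda>t. (-m + 1 * t) * h t powr \<gamma>) integrable_on {a..b}" using tint[of a b \<gamma> "-m" 1] g by simp
  qed (use m in auto)
  hence "integral {a..m} (\<lambda>t. (-m + 1 * t) * h t powr \<gamma>) = - integral {m..b} (\<lambda>t. (-m + 1 * t) * h t powr \<gamma>)"
    using z by simp
  moreover have "integral {a..m} (\<lambda>t. (m - t) * h t powr \<gamma>) = - integral {a..m} (\<lambda>t. (-m + 1 * t) * h t powr \<gamma>)"
  proof -
    have e: "(\<lambda>t. (m - t) * h t powr \<gamma>) = (\<lambda>t. - ((t - m) * h t powr \<gamma>))"
      by (auto simp: algebra_simps)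
    have "integral {a..m} (\<lambda>t. (m - t) * h t powr \<gamma>) = - integral {a..m} (\<lambda>t. (t - m) * h t powr \<gamma>)"
      unfolding e by (rule integral_neg)
    thus ?thesis by simp
  qed
  ultimately show ?thesis by (simp add: m_def)
qed

lemma GR:
  assumes g: "\<gamma> > 0"
  shows "Phi \<gamma> (gg \<gamma>) \<ge> ((\<gamma>+1)/(\<gamma>+2)) powr (\<gamma>+1) * Tot \<gamma>"
proof -
  define m where "m = gg \<gamma>"
  have m: "a < m" "m < b" using gg_in[OF g] by (auto simp: m_def)
  define H where "H = h m"
  define G where "G = GG \<gamma> m"
  define p where "p = m + G"
  define C where "C = (H/G) powr \<gamma>"
  define r where "r = (\<gamma>+2)/(\<gamma>+1)"
  define a2 where "a2 = m - G/(\<gamma>+1)"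
  define \<Phi> where "\<Phi> = Phi \<gamma> m"
  define Lm where "Lm = integral {a..m} (\<lambda>t. h t powr \<gamma>)"
  have H: "H > 0" using pos m by (auto simp: H_def)
  have G: "G > 0" using GG_pos g m by (auto simp: G_def)
  have r1: "r > 1" using g by (simp add: r_def)
  have PhiH: "\<Phi> = H powr \<gamma> * G / (\<gamma>+1)" using Phi_GG[OF g m] by (simp add: \<Phi>_def H_def G_def)
  have pa2: "p - a2 = r * G" using g by (simp add: p_def a2_def r_def field_simps)
  have a2m: "a2 < m" using G g by (simp add: a2_def)
  have Kf: "h t powr \<gamma> \<le> C * (p - t) powr \<gamma>" if t: "t \<in> {a..m}" for t
  proof -
    have "h t \<le> H * (p - t) / G" using CL1[OF g m t] by (simp add: H_def G_def p_def)
    hence "h t powr \<gamma> \<le> (H * (p - t) / G) powr \<gamma>" using nn[of t] t m g by (intro powr_mono2) auto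
    also have "\<dots> = C * (p - t) powr \<gamma>" unfolding C_def by (rule Kpow) (use H G t p_def in auto)
    finally show ?thesis .
  qed
  have I0u: "((\<lambda>t. C * (p - t) powr \<gamma>) has_integral C * ((p - u) powr (\<gamma>+1) - G powr (\<gamma>+1)) / (\<gamma>+1)) {u..m}"
    if "u \<le> m" for u
    using cone_intc[of u m p \<gamma> C] that g G by (simp add: p_def)
  define I0 where "I0 = C * ((r * G) powr (\<gamma>+1) - G powr (\<gamma>+1)) / (\<gamma>+1)"
  have I0v: "I0 = \<Phi> * (r powr (\<gamma>+1) - 1)"
  proof -
    have "(r * G) powr (\<gamma>+1) = r powr (\<gamma>+1) * G powr (\<gamma>+1)" using r1 G by (simp add: powr_mult)
    hence "I0 = (C * G powr (\<gamma>+1)) * (r powr (\<gamma>+1) - 1) / (\<gamma>+1)"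
      by (simp add: I0_def algebra_simps)
    also have "C * G powr (\<gamma>+1) = H powr \<gamma> * G" unfolding C_def by (rule powalg(1)[OF H G])
    finally show ?thesis using PhiH by simp
  qed
  have mom: "integral {a..m} (\<lambda>t. (m - t) * h t powr \<gamma>) \<le> \<Phi> * G / (\<gamma>+2)"
    using cen[OF g] CL3[OF g m] by (simp add: m_def \<Phi>_def G_def)
  have "Lm \<le> I0"
  proof (cases "a2 < a")
    case True
    have "Lm \<le> C * ((p - a) powr (\<gamma>+1) - G powr (\<gamma>+1)) / (\<gamma>+1)"
      unfolding Lm_def
    proof (rule has_integral_le[OF _ I0u])
      show "((\<lambda>t. h t powr \<gamma>) has_integral integral {a..m} (\<lambda>t. h t powr \<gamma>)) {a..m}"
        by (rule hint_has) (use m g in auto)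
    qed (use Kf m in auto)
    also have "\<dots> \<le> I0" unfolding I0_def
      using True pa2 H G g m a2m
      by (intro divide_right_mono mult_left_mono diff_right_mono powr_mono2) (auto simp: C_def p_def)
    finally show ?thesis .
  next
    case False
    hence aa2: "a \<le> a2" by simp
    define I1 where "I1 = C * (cprim (-G) 1 \<gamma> (p - a2) - cprim (-G) 1 \<gamma> (p - m))"
    have I1h: "((\<lambda>t. (m - t) * (C * (p - t) powr \<gamma>)) has_integral I1) {a2..m}"
    proof -
      have fi: "((\<lambda>t. C * (((-G) + 1 * (p - t)) * (p - t) powr \<gamma>)) has_integral I1) {a2..m}"
        unfolding I1_def by (intro has_integral_mult_right cone_int) (use a2m g G in \<open>auto simp: p_def\<close>)
      show ?thesis by (rule has_integral_eq[OF _ fi]) (simp add: p_def algebra_simps)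
    qed
    have I1v: "I1 = \<Phi> * G / (\<gamma>+2)"
    proof -
      have z: "cprim (-G) 1 \<gamma> (r * G) = 0"
      proof -
        have "(r * G) powr (\<gamma>+2) = (r * G) powr (\<gamma>+1) * (r * G)"
        proof -
          have "(r * G) powr ((\<gamma>+1) + 1) = (r * G) powr (\<gamma>+1) * (r * G) powr 1" by (rule powr_add)
          moreover have "(\<gamma>+1) + 1 = \<gamma> + 2" by simp
          ultimately show ?thesis using r1 G by simp
        qed
        moreover have "-G / (\<gamma>+1) + r * G / (\<gamma>+2) = 0"
        proof -
          have n1: "\<gamma> + 2 \<noteq> 0" using g by simp
          have "r * G / (\<gamma>+2) = G * ((\<gamma>+2) / (\<gamma>+2)) / (\<gamma>+1)" by (simp add: r_def)
          also have "(\<gamma>+2) / (\<gamma>+2) = 1" using n1 by simp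
          finally show ?thesis by simp
        qed
        ultimately show ?thesis unfolding cprim_def
        proof -
          assume e: "(r * G) powr (\<gamma>+2) = (r * G) powr (\<gamma>+1) * (r * G)"
            and z0: "-G / (\<gamma>+1) + r * G / (\<gamma>+2) = 0"
          define X where "X = (r * G) powr (\<gamma>+1)"
          have "- G * X / (\<gamma> + 1) + 1 * (X * (r * G)) / (\<gamma> + 2) = X * (-G / (\<gamma>+1) + r * G / (\<gamma>+2))"
            by (simp add: algebra_simps)
          also have "\<dots> = 0" using z0 by simp
          finally show "- G * (r * G) powr (\<gamma> + 1) / (\<gamma> + 1) + 1 * (r * G) powr (\<gamma> + 2) / (\<gamma> + 2) = 0"
            using e by (simp add: X_def)
        qed
      qed
      have e1: "G * G powr (\<gamma>+1) = G powr (\<gamma>+2)"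
      proof -
        have "G powr ((\<gamma>+1) + 1) = G powr (\<gamma>+1) * G powr 1" by (rule powr_add)
        moreover have "(\<gamma>+1) + 1 = \<gamma> + 2" by simp
        ultimately show ?thesis using G by simp
      qed
      have "I1 = C * G powr (\<gamma>+2) * (1/(\<gamma>+1) - 1/(\<gamma>+2))"
        unfolding I1_def pa2 z using e1 by (simp add: p_def cprim_def algebra_simps diff_divide_distrib)
      also have "C * G powr (\<gamma>+2) = H powr \<gamma> * G^2" unfolding C_def by (rule powalg(2)[OF H G])
      also have "1/(\<gamma>+1) - 1/(\<gamma>+2) = 1/((\<gamma>+1)*(\<gamma>+2))" using g by (simp add: field_simps)
      finally show ?thesis using PhiH by (simp add: power2_eq_square)
    qed
    have A: "(m - a2) * integral {a..a2} (\<lambda>t. h t powr \<gamma>) \<le> integral {a..a2} (\<lambda>t. (m - t) * h t powr \<gamma>)"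
    proof (rule has_integral_le)
      show "((\<lambda>t. (m - a2) * h t powr \<gamma>) has_integral (m - a2) * integral {a..a2} (\<lambda>t. h t powr \<gamma>)) {a..a2}"
        by (intro has_integral_mult_right hint_has) (use aa2 a2m m g in auto)
      show "((\<lambda>t. (m - t) * h t powr \<gamma>) has_integral integral {a..a2} (\<lambda>t. (m - t) * h t powr \<gamma>)) {a..a2}"
        using tint_has[of a a2 \<gamma> m "-1"] aa2 a2m m g by simp
      fix t assume "t \<in> {a..a2}"
      thus "(m - a2) * h t powr \<gamma> \<le> (m - t) * h t powr \<gamma>" by (intro mult_right_mono) auto
    qed
    have B: "(m - a2) * (integral {a2..m} (\<lambda>t. h t powr \<gamma>) - I0) \<le>
        integral {a2..m} (\<lambda>t. (m - t) * h t powr \<gamma>) - I1"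
    proof (rule has_integral_le)
      have "((\<lambda>t. C * (p - t) powr \<gamma>) has_integral I0) {a2..m}"
        using I0u[of a2] a2m pa2 by (simp add: I0_def)
      thus "((\<lambda>t. (m - a2) * (h t powr \<gamma> - C * (p - t) powr \<gamma>)) has_integral
          (m - a2) * (integral {a2..m} (\<lambda>t. h t powr \<gamma>) - I0)) {a2..m}"
        by (intro has_integral_mult_right has_integral_diff hint_has) (use aa2 m g in auto)
      have "((\<lambda>t. (m - t) * h t powr \<gamma>) has_integral integral {a2..m} (\<lambda>t. (m - t) * h t powr \<gamma>)) {a2..m}"
        using tint_has[of a2 m \<gamma> m "-1"] aa2 a2m m g by simp
      thus "((\<lambda>t. (m - t) * h t powr \<gamma> - (m - t) * (C * (p - t) powr \<gamma>)) has_integral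
          integral {a2..m} (\<lambda>t. (m - t) * h t powr \<gamma>) - I1) {a2..m}"
        by (intro has_integral_diff I1h)
      fix t assume t: "t \<in> {a2..m}"
      have "h t powr \<gamma> - C * (p - t) powr \<gamma> \<le> 0" using Kf[of t] t aa2 by auto
      moreover have "m - t \<le> m - a2" using t by auto
      ultimately have "(m - a2) * (h t powr \<gamma> - C * (p - t) powr \<gamma>) \<le> (m - t) * (h t powr \<gamma> - C * (p - t) powr \<gamma>)"
        using t by (intro mult_right_mono_neg) auto
      thus "(m - a2) * (h t powr \<gamma> - C * (p - t) powr \<gamma>) \<le> (m - t) * h t powr \<gamma> - (m - t) * (C * (p - t) powr \<gamma>)"
        by (simp add: algebra_simps)
    qed
    have c1: "integral {a..a2} (\<lambda>t. h t powr \<gamma>) + integral {a2..m} (\<lambda>t. h t powr \<gamma>) = Lm"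
      unfolding Lm_def by (rule Henstock_Kurzweil_Integration.integral_combine) (use aa2 a2m m g hint in auto)
    have c2: "integral {a..a2} (\<lambda>t. (m - t) * h t powr \<gamma>) + integral {a2..m} (\<lambda>t. (m - t) * h t powr \<gamma>)
        = integral {a..m} (\<lambda>t. (m - t) * h t powr \<gamma>)"
    proof (rule Henstock_Kurzweil_Integration.integral_combine)
      show "(\<lambda>t. (m - t) * h t powr \<gamma>) integrable_on {a..m}" using tint[of a m \<gamma> m "-1"] m g by simp
    qed (use aa2 a2m in auto)
    have ex: "(m - a2) * (Lm - I0) = (m - a2) * integral {a..a2} (\<lambda>t. h t powr \<gamma>)
        + (m - a2) * (integral {a2..m} (\<lambda>t. h t powr \<gamma>) - I0)"
      unfolding c1[symmetric] by (simp add: algebra_simps)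
    have "(m - a2) * (Lm - I0) \<le> integral {a..m} (\<lambda>t. (m - t) * h t powr \<gamma>) - I1"
      unfolding ex using A B c2 by linarith
    also have "\<dots> \<le> 0" using mom I1v by simp
    finally have "(m - a2) * (Lm - I0) \<le> 0" .
    thus ?thesis using a2m by (simp add: mult_le_0_iff)
  qed
  hence "Tot \<gamma> \<le> \<Phi> * r powr (\<gamma>+1)"
    using split_tot[of m \<gamma>] m g I0v by (simp add: Lm_def Pr_def \<Phi>_def algebra_simps)
  hence "((\<gamma>+1)/(\<gamma>+2)) powr (\<gamma>+1) * Tot \<gamma> \<le> ((\<gamma>+1)/(\<gamma>+2)) powr (\<gamma>+1) * (\<Phi> * r powr (\<gamma>+1))"
    by (intro mult_left_mono) auto
  also have "((\<gamma>+1)/(\<gamma>+2)) powr (\<gamma>+1) * r powr (\<gamma>+1) = 1"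
  proof -
    have "((\<gamma>+1)/(\<gamma>+2)) powr (\<gamma>+1) * r powr (\<gamma>+1) = (((\<gamma>+1)/(\<gamma>+2)) * r) powr (\<gamma>+1)"
      by (rule powr_mult[symmetric])
    also have "((\<gamma>+1)/(\<gamma>+2)) * r = 1" using g by (simp add: r_def)
    finally show ?thesis by simp
  qed
  hence "((\<gamma>+1)/(\<gamma>+2)) powr (\<gamma>+1) * (\<Phi> * r powr (\<gamma>+1)) = \<Phi>" by (simp add: algebra_simps)
  finally show ?thesis by (simp add: \<Phi>_def m_def)
qed

end


context cf begin

lemma Phi_a: "Phi \<gamma> a = Tot \<gamma>" by (simp add: Phi_def Tot_def)

lemma Berwald:
  assumes al: "0 < \<alpha>" "\<alpha> \<le> \<beta>" and x: "a < x" "x < b"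
  shows "Phi \<beta> x / Tot \<beta> \<ge> (Phi \<alpha> x / Tot \<alpha>) powr ((\<beta>+1)/(\<alpha>+1))"
proof -
  have be: "\<beta> > 0" using al by simp
  define L where "L y = ln (Phi \<beta> y) / (\<beta>+1) - ln (Phi \<alpha> y) / (\<alpha>+1)" for y
  have Ppos: "Phi \<gamma> y > 0" if "\<gamma> > 0" "y \<in> {a..x}" for \<gamma> y using Phi_pos[of \<gamma> y] that x by auto
  have "L a \<le> L x"
  proof (rule DERIV_nonneg_imp_increasing_open[of a x L])
    show "a \<le> x" using x by simp
    show "continuous_on {a..x} L"
    proof -
      have "\<forall>y\<in>{a..x}. Phi \<alpha> y > 0" "\<forall>y\<in>{a..x}. Phi \<beta> y > 0" using Ppos al be by auto
      thus ?thesis unfolding L_def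
        by (intro continuous_intros continuous_on_subset[OF Phi_cont]) (use x al be in auto)
    qed
    fix z assume z: "a < z" "z < x"
    have zab: "z \<in> {a<..<b}" using z x by auto
    have Pa: "Phi \<alpha> z > 0" and Pb: "Phi \<beta> z > 0" using Ppos z al be by auto
    have dA: "DERIV (\<lambda>y. ln (Phi \<alpha> y)) z :> 1 / Phi \<alpha> z * (- (h z powr \<alpha>))"
      by (rule DERIV_chain2[OF DERIV_ln_divide[OF Pa] Phi_deriv[OF zab]]) (use al in simp)
    have dB: "DERIV (\<lambda>y. ln (Phi \<beta> y)) z :> 1 / Phi \<beta> z * (- (h z powr \<beta>))"
      by (rule DERIV_chain2[OF DERIV_ln_divide[OF Pb] Phi_deriv[OF zab]]) (use be in simp)
    have d: "DERIV L z :> (1 / Phi \<beta> z * (- (h z powr \<beta>))) / (\<beta>+1) - (1 / Phi \<alpha> z * (- (h z powr \<alpha>))) / (\<alpha>+1)"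
      unfolding L_def by (intro DERIV_diff DERIV_cdivide dA dB)
    have A: "h z powr \<alpha> > 0" and B: "h z powr \<beta> > 0" using pos[of z] zab by auto
    have c4: "Phi \<beta> z \<ge> h z powr \<beta> * GG \<alpha> z / (\<beta>+1)" by (rule CL4) (use al zab in auto)
    hence k1: "h z powr \<beta> * GG \<alpha> z \<le> (\<beta>+1) * Phi \<beta> z"
      using be by (simp add: pos_divide_le_eq mult.commute)
    have k2: "GG \<alpha> z * h z powr \<alpha> = (\<alpha>+1) * Phi \<alpha> z" using A by (simp add: GG_def)
    have le: "h z powr \<beta> * GG \<alpha> z * h z powr \<alpha> \<le> (\<beta>+1) * Phi \<beta> z * h z powr \<alpha>"
      using k1 A by (intro mult_right_mono) auto
    have eq: "h z powr \<beta> * GG \<alpha> z * h z powr \<alpha> = h z powr \<beta> * ((\<alpha>+1) * Phi \<alpha> z)"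
      by (simp only: mult.assoc k2)
    have "h z powr \<beta> * ((\<alpha>+1) * Phi \<alpha> z) = h z powr \<beta> * GG \<alpha> z * h z powr \<alpha>" using eq by (rule sym)
    also have "\<dots> \<le> (\<beta>+1) * Phi \<beta> z * h z powr \<alpha>" by (rule le)
    also have "\<dots> = h z powr \<alpha> * ((\<beta>+1) * Phi \<beta> z)" by (simp add: mult.commute)
    finally have key: "h z powr \<beta> * ((\<alpha>+1) * Phi \<alpha> z) \<le> h z powr \<alpha> * ((\<beta>+1) * Phi \<beta> z)" .
    have "h z powr \<beta> / ((\<beta>+1) * Phi \<beta> z) \<le> h z powr \<alpha> / ((\<alpha>+1) * Phi \<alpha> z)"
    proof -
      have yz: "(\<beta>+1) * Phi \<beta> z * ((\<alpha>+1) * Phi \<alpha> z) > 0" using Pa Pb al be by simp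
      have "(h z powr \<beta> * ((\<alpha>+1) * Phi \<alpha> z) - h z powr \<alpha> * ((\<beta>+1) * Phi \<beta> z)) /
          ((\<beta>+1) * Phi \<beta> z * ((\<alpha>+1) * Phi \<alpha> z)) \<le> 0"
        using key yz by (intro divide_nonpos_pos) auto
      thus ?thesis using yz by (subst frac_le_eq) auto
    qed
    hence "(1 / Phi \<beta> z * (- (h z powr \<beta>))) / (\<beta>+1) - (1 / Phi \<alpha> z * (- (h z powr \<alpha>))) / (\<alpha>+1) \<ge> 0"
      by (simp add: field_simps)
    thus "\<exists>y. DERIV L z :> y \<and> 0 \<le> y" using d by blast
  qed
  hence "ln (Phi \<beta> x) / (\<beta>+1) - ln (Tot \<beta>) / (\<beta>+1) \<ge> ln (Phi \<alpha> x) / (\<alpha>+1) - ln (Tot \<alpha>) / (\<alpha>+1)"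
    unfolding L_def Phi_a by simp
  hence "ln (Phi \<beta> x / Tot \<beta>) / (\<beta>+1) \<ge> ln (Phi \<alpha> x / Tot \<alpha>) / (\<alpha>+1)"
    using Ppos[of \<beta> x] Ppos[of \<alpha> x] Tot_pos[of \<alpha>] Tot_pos[of \<beta>] al be x
    by (simp add: ln_div diff_divide_distrib)
  hence "ln (Phi \<beta> x / Tot \<beta>) \<ge> ((\<beta>+1)/(\<alpha>+1)) * ln (Phi \<alpha> x / Tot \<alpha>)"
    using al be by (simp add: field_simps)
  hence "exp (((\<beta>+1)/(\<alpha>+1)) * ln (Phi \<alpha> x / Tot \<alpha>)) \<le> exp (ln (Phi \<beta> x / Tot \<beta>))" by simp
  thus ?thesis
    using Ppos[of \<beta> x] Ppos[of \<alpha> x] Tot_pos[of \<alpha>] Tot_pos[of \<beta>] al be x by (simp add: powr_def)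
qed

lemma Hom:
  assumes g: "\<gamma> > 0" and yx: "a < y" "y \<le> x" "x < b"
  shows "Phi \<gamma> y / (b - y) powr (\<gamma>+1) \<le> Phi \<gamma> x / (b - x) powr (\<gamma>+1)"
proof -
  define N where "N t = ln (Phi \<gamma> t) - (\<gamma>+1) * ln (b - t)" for t
  have Ppos: "Phi \<gamma> t > 0" if "t \<in> {y..x}" for t using Phi_pos[of \<gamma> t] that yx g by auto
  have "N y \<le> N x"
  proof (rule DERIV_nonneg_imp_increasing_open[of y x N])
    show "y \<le> x" using yx by simp
    show "continuous_on {y..x} N"
    proof -
      have "\<forall>t\<in>{y..x}. Phi \<gamma> t > 0" using Ppos by auto
      thus ?thesis unfolding N_def
        by (intro continuous_intros continuous_on_subset[OF Phi_cont]) (use yx g in auto)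
    qed
    fix z assume z: "y < z" "z < x"
    have zab: "z \<in> {a<..<b}" using z yx by auto
    have P: "Phi \<gamma> z > 0" using Ppos z by auto
    have bz: "b - z > 0" using zab by auto
    have d1: "DERIV (\<lambda>t. ln (Phi \<gamma> t)) z :> 1 / Phi \<gamma> z * (- (h z powr \<gamma>))"
      by (rule DERIV_chain2[OF DERIV_ln_divide[OF P] Phi_deriv[OF zab]]) (use g in simp)
    have d2: "DERIV (\<lambda>t. ln (b - t)) z :> 1 / (b - z) * (0 - 1)"
      using bz by (auto intro!: derivative_eq_intros simp: field_simps)
    have d: "DERIV N z :> 1 / Phi \<gamma> z * (- (h z powr \<gamma>)) - (\<gamma>+1) * (1 / (b - z) * (0 - 1))"
      unfolding N_def by (intro DERIV_diff DERIV_cmult d1 d2)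
    have c0: "GG \<gamma> z \<ge> b - z" by (rule CL0) (use g zab in auto)
    have A: "h z powr \<gamma> > 0" using pos[of z] zab by auto
    have "(\<gamma>+1) * Phi \<gamma> z \<ge> (b - z) * h z powr \<gamma>"
      using c0 A by (simp add: GG_def field_simps)
    hence "h z powr \<gamma> / Phi \<gamma> z \<le> (\<gamma>+1) / (b - z)"
      using P bz by (simp add: divide_simps mult.commute)
    hence "1 / Phi \<gamma> z * (- (h z powr \<gamma>)) - (\<gamma>+1) * (1 / (b - z) * (0 - 1)) \<ge> 0"
      by simp
    thus "\<exists>v. DERIV N z :> v \<and> 0 \<le> v" using d by blast
  qed
  hence "exp (N y) \<le> exp (N x)" by simp
  moreover have "exp (N t) = Phi \<gamma> t / (b - t) powr (\<gamma>+1)" if "t \<in> {y..x}" for t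
  proof -
    have "exp (N t) = exp (ln (Phi \<gamma> t)) / exp ((\<gamma>+1) * ln (b - t))" by (simp add: N_def exp_diff)
    also have "\<dots> = Phi \<gamma> t / (b - t) powr (\<gamma>+1)" using Ppos[OF that] that yx by (simp add: powr_def)
    finally show ?thesis .
  qed
  ultimately show ?thesis using yx by simp
qed

end


context cf begin

lemma refl_cf: "cf (-b) (-a) (\<lambda>t. h (-t))"
proof
  show "-b < -a" using ab by simp
  show "concave_on {-b..-a} (\<lambda>t. h (-t))"
    unfolding concave_on_iff
  proof (intro conjI ballI allI impI)
    show "convex {-b..-a::real}" by simp
    fix x y u v :: real assume xy: "x \<in> {-b..-a}" "y \<in> {-b..-a}" and uv: "0 \<le> u" "0 \<le> v" "u + v = 1"
    have "h (u *\<^sub>R (-x) + v *\<^sub>R (-y)) \<ge> u * h (-x) + v * h (-y)"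
      using conc xy uv unfolding concave_on_iff by (metis atLeastAtMost_iff minus_le_iff le_minus_iff)
    thus "u * h (- x) + v * h (- y) \<le> h (- (u *\<^sub>R x + v *\<^sub>R y))" by (simp add: algebra_simps)
  qed
  show "\<And>t. t \<in> {-b..-a} \<Longrightarrow> h (-t) \<ge> 0" using nn by (metis atLeastAtMost_iff minus_le_iff le_minus_iff)
  show "\<exists>t\<in>{-b..-a}. h (-t) \<noteq> 0"
  proof -
    obtain t where "t \<in> {a..b}" "h t \<noteq> 0" using nz by blast
    thus ?thesis by (intro bexI[of _ "-t"]) auto
  qed
qed

definition "GGp \<gamma> x = (\<gamma>+1) * Pr \<gamma> x / h x powr \<gamma>"
definition "Mo \<gamma> y = integral {a..y} (\<lambda>t. (y - t) * h t powr \<gamma>)"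

lemma refl_Phi: "cf.Phi (-a) (\<lambda>t. h (-t)) \<gamma> (-x) = Pr \<gamma> x"
proof -
  have "integral {-x..-a} (\<lambda>t. (\<lambda>s. h s powr \<gamma>) (-t)) = integral {a..x} (\<lambda>s. h s powr \<gamma>)"
    using Henstock_Kurzweil_Integration.integral_reflect_real[of x a "\<lambda>s. h s powr \<gamma>"] by simp
  thus ?thesis unfolding cf.Phi_def[OF refl_cf] Pr_def by simp
qed

lemma refl_GG: "cf.GG (-a) (\<lambda>t. h (-t)) \<gamma> (-x) = GGp \<gamma> x"
  unfolding cf.GG_def[OF refl_cf] GGp_def refl_Phi by simp

lemma Mom_pre:
  assumes g: "\<gamma> > 0" and x: "a < x" "x < b"
  shows "Mo \<gamma> x \<le> Pr \<gamma> x * GGp \<gamma> x / (\<gamma>+2)"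
proof -
  interpret R: cf "-b" "-a" "\<lambda>t. h (-t)" by (rule refl_cf)
  have "integral {-x..-a} (\<lambda>t. (t - (-x)) * h (-t) powr \<gamma>) \<le> R.Phi \<gamma> (-x) * R.GG \<gamma> (-x) / (\<gamma>+2)"
    by (rule R.CL3) (use g x in auto)
  moreover have "integral {-x..-a} (\<lambda>t. (t - (-x)) * h (-t) powr \<gamma>) = Mo \<gamma> x"
  proof -
    have "integral {-x..-a} (\<lambda>t. (\<lambda>s. (x - s) * h s powr \<gamma>) (-t)) = integral {a..x} (\<lambda>s. (x - s) * h s powr \<gamma>)"
      using Henstock_Kurzweil_Integration.integral_reflect_real[of x a "\<lambda>s. (x - s) * h s powr \<gamma>"] by simp
    thus ?thesis unfolding Mo_def by (simp add: algebra_simps)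
  qed
  ultimately show ?thesis unfolding refl_Phi refl_GG by simp
qed

lemma Pow_pre:
  assumes g: "\<gamma> > 0" "\<gamma> \<le> \<delta>" and x: "a < x" "x < b"
  shows "Pr \<delta> x \<ge> h x powr \<delta> * GGp \<gamma> x / (\<delta>+1)"
proof -
  interpret R: cf "-b" "-a" "\<lambda>t. h (-t)" by (rule refl_cf)
  have "R.Phi \<delta> (-x) \<ge> h (-(-x)) powr \<delta> * R.GG \<gamma> (-x) / (\<delta>+1)"
    by (rule R.CL4) (use g x in auto)
  thus ?thesis unfolding refl_Phi refl_GG by simp
qed

end


context cf begin

definition "Sm \<gamma> y = integral {a..y} (\<lambda>t. t * h t powr \<gamma>)"

lemma tw_int: "\<gamma> \<ge> 0 \<Longrightarrow> a \<le> u \<Longrightarrow> v \<le> b \<Longrightarrow> (\<lambda>t. t * h t powr \<gamma>) integrable_on {u..v}"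
  using wint_sub[of "\<lambda>t. t" u v \<gamma>] by (auto intro!: continuous_intros)

lemma Mo_eq:
  assumes "\<gamma> \<ge> 0" "a \<le> y" "y \<le> b"
  shows "Mo \<gamma> y = y * Pr \<gamma> y - Sm \<gamma> y"
proof -
  have "((\<lambda>t. y * h t powr \<gamma> - t * h t powr \<gamma>) has_integral (y * Pr \<gamma> y - Sm \<gamma> y)) {a..y}"
    unfolding Pr_def Sm_def
    by (intro has_integral_diff has_integral_mult_right integrable_integral hint tw_int) (use assms in auto)
  hence "((\<lambda>t. (y - t) * h t powr \<gamma>) has_integral (y * Pr \<gamma> y - Sm \<gamma> y)) {a..y}"
    by (simp add: algebra_simps)
  thus ?thesis unfolding Mo_def by (rule integral_unique)
qed

lemma Sm_deriv: "z \<in> {a<..<b} \<Longrightarrow> \<gamma> \<ge> 0 \<Longrightarrow> (Sm \<gamma> has_real_derivative z * h z powr \<gamma>) (at z)"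
proof -
  assume z: "z \<in> {a<..<b}" and g: "\<gamma> \<ge> 0"
  have "continuous_on {a<..<b} (\<lambda>t. t * h t powr \<gamma>)" by (intro continuous_intros hpow_cont)
  thus ?thesis unfolding Sm_def[abs_def]
    using z by (intro deriv_integral[OF tw_int] g) auto
qed

lemma Mo_deriv:
  assumes z: "z \<in> {a<..<b}" and g: "\<gamma> \<ge> 0"
  shows "(Mo \<gamma> has_real_derivative Pr \<gamma> z) (at z)"
proof -
  have "((\<lambda>y. y * Pr \<gamma> y - Sm \<gamma> y) has_real_derivative (1 * Pr \<gamma> z + h z powr \<gamma> * z) - z * h z powr \<gamma>) (at z)"
    by (intro DERIV_diff DERIV_mult DERIV_ident Pr_deriv Sm_deriv z g)
  hence "((\<lambda>y. y * Pr \<gamma> y - Sm \<gamma> y) has_real_derivative Pr \<gamma> z) (at z)" by (simp add: algebra_simps)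
  thus ?thesis
  proof (rule has_field_derivative_transform_within_open[where S="{a<..<b}"])
    fix y assume "y \<in> {a<..<b}"
    thus "y * Pr \<gamma> y - Sm \<gamma> y = Mo \<gamma> y" using Mo_eq[of \<gamma> y] g by simp
  qed (use z in auto)
qed

lemma Mo_cont: assumes g: "\<gamma> \<ge> 0" shows "continuous_on {a..b} (Mo \<gamma>)"
proof -
  have "continuous_on {a..b} (\<lambda>y. y * Pr \<gamma> y - Sm \<gamma> y)"
    unfolding Sm_def[abs_def]
    by (intro continuous_intros Pr_cont g indefinite_integral_continuous_1 tw_int) auto
  thus ?thesis
  proof (rule continuous_on_eq)
    fix y assume "y \<in> {a..b}"
    thus "y * Pr \<gamma> y - Sm \<gamma> y = Mo \<gamma> y" using Mo_eq[of \<gamma> y] g by simp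
  qed
qed

lemma Mo_b: assumes g: "\<gamma> > 0" shows "Mo \<gamma> b = (b - gg \<gamma>) * Tot \<gamma>"
  using Mo_eq[of \<gamma> b] g ab Tot_t[OF g]
  by (simp add: Pr_def Sm_def Tot_def algebra_simps)

lemma Mo_bounds:
  assumes g: "\<gamma> \<ge> 0" and y: "a \<le> y" "y \<le> b"
  shows "0 \<le> Mo \<gamma> y" "Mo \<gamma> y \<le> (y - a) * Pr \<gamma> y"
proof -
  have i: "(\<lambda>t. (y - t) * h t powr \<gamma>) integrable_on {a..y}"
  proof -
    have "continuous_on {a..b} (\<lambda>t. y - t)" by (intro continuous_intros)
    thus ?thesis using wint_sub[of "\<lambda>t. y - t" a y \<gamma>] y g by auto
  qed
  show "0 \<le> Mo \<gamma> y" unfolding Mo_def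
    by (rule integral_nonneg[OF i]) (use nn y in auto)
  have "Mo \<gamma> y \<le> integral {a..y} (\<lambda>t. (y - a) * h t powr \<gamma>)"
    unfolding Mo_def
  proof (rule integral_le[OF i])
    show "(\<lambda>t. (y - a) * h t powr \<gamma>) integrable_on {a..y}"
      using integrable_cmul[OF hint[of a y \<gamma>], of "y - a"] y g by simp
  qed (use y g in \<open>auto intro!: mult_right_mono\<close>)
  also have "\<dots> = (y - a) * Pr \<gamma> y" by (simp add: Pr_def)
  finally show "Mo \<gamma> y \<le> (y - a) * Pr \<gamma> y" .
qed

lemma Pr_bound:
  assumes g: "\<gamma> \<ge> 0" and y: "a \<le> y" "y \<le> b"
  shows "Pr \<gamma> y \<le> (y - a) * Bd powr \<gamma>"
proof -
  have "Pr \<gamma> y \<le> integral {a..y} (\<lambda>t. Bd powr \<gamma>)"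
    unfolding Pr_def by (rule integral_le) (use hint y g nn bound in \<open>auto intro!: powr_mono2\<close>)
  thus ?thesis using y by simp
qed

end


lemma key_alg:
  fixes Pa Pb Mb A B \<alpha> \<beta> :: real
  assumes Pb: "Pb > 0" and B: "B > 0" and Mb: "0 \<le> Mb" and Pa: "0 \<le> Pa" and ab: "\<beta> \<le> \<alpha>" and b0: "\<beta> > 0"
    and F1: "(\<beta>+2) * Mb \<le> (\<beta>+1) * Pb * Pb / B"
    and F2: "(\<beta>+1) * Pb * A / B \<le> (\<alpha>+1) * Pa"
  shows "(\<alpha>+2) * Pa - (\<beta>+2) * (((Pb * Pa + A * Mb) * Pb - Mb * Pa * B) / (Pb * Pb)) \<ge> 0"
proof -
  define m where "m = (\<beta>+2) * Mb / Pb"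
  define X where "X = A - Pa * B / Pb"
  have E: "(\<alpha>+2) * Pa - (\<beta>+2) * (((Pb * Pa + A * Mb) * Pb - Mb * Pa * B) / (Pb * Pb)) = (\<alpha> - \<beta>) * Pa - m * X"
    unfolding m_def X_def using Pb by (simp add: field_simps)
  have m0: "m \<ge> 0" using Mb Pb b0 by (simp add: m_def)
  have m1: "m \<le> (\<beta>+1) * Pb / B"
  proof -
    have "(\<beta>+2) * Mb / Pb \<le> ((\<beta>+1) * Pb * Pb / B) / Pb" using F1 Pb by (intro divide_right_mono) auto
    also have "\<dots> = (\<beta>+1) * Pb / B" using Pb by simp
    finally show ?thesis by (simp add: m_def)
  qed
  have "m * X \<le> (\<alpha> - \<beta>) * Pa"
  proof (cases "X \<le> 0")
    case True
    hence "m * X \<le> 0" using m0 by (simp add: mult_nonneg_nonpos)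
    also have "0 \<le> (\<alpha> - \<beta>) * Pa" using ab Pa by simp
    finally show ?thesis .
  next
    case False
    hence "m * X \<le> ((\<beta>+1) * Pb / B) * X" using m1 by (intro mult_right_mono) auto
    also have "((\<beta>+1) * Pb / B) * X = (\<beta>+1) * Pb * A / B - (\<beta>+1) * Pa"
      unfolding X_def using Pb B by (simp add: field_simps)
    also have "\<dots> \<le> (\<alpha> - \<beta>) * Pa" using F2 by (simp add: algebra_simps)
    finally show ?thesis .
  qed
  thus ?thesis using E by simp
qed

context cf begin

lemma Ccomp:
  assumes b0: "0 < \<beta>" and ba: "\<beta> \<le> \<alpha>"
  shows "(\<beta>+2) * (b - gg \<beta>) \<le> (\<alpha>+2) * (b - gg \<alpha>)"
proof -
  have a0: "\<alpha> > 0" using b0 ba by simp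
  define W where "W y = (\<alpha>+2) * Mo \<alpha> y - (\<beta>+2) * (Mo \<beta> y * Pr \<alpha> y / Pr \<beta> y)" for y
  have mono: "W x0 \<le> W b" if x0: "a < x0" "x0 < b" for x0
  proof (rule DERIV_nonneg_imp_increasing_open[of x0 b W])
    show "x0 \<le> b" using x0 by simp
    have "\<forall>y\<in>{x0..b}. Pr \<beta> y \<noteq> 0"
    proof
      fix y assume "y \<in> {x0..b}"
      thus "Pr \<beta> y \<noteq> 0" using Pr_pos[of \<beta> y] b0 x0 by auto
    qed
    thus "continuous_on {x0..b} W" unfolding W_def
      by (intro continuous_intros continuous_on_subset[OF Mo_cont] continuous_on_subset[OF Pr_cont])
         (use a0 b0 x0 in auto)
    fix z assume z: "x0 < z" "z < b"
    have zab: "z \<in> {a<..<b}" using z x0 by auto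
    have Pb: "Pr \<beta> z > 0" using Pr_pos[of \<beta> z] b0 zab by auto
    have Pa: "Pr \<alpha> z > 0" using Pr_pos[of \<alpha> z] a0 zab by auto
    have d: "DERIV W z :> (\<alpha>+2) * Pr \<alpha> z - (\<beta>+2) * (((Pr \<beta> z * Pr \<alpha> z + h z powr \<alpha> * Mo \<beta> z) * Pr \<beta> z
           - Mo \<beta> z * Pr \<alpha> z * h z powr \<beta>) / (Pr \<beta> z * Pr \<beta> z))"
      unfolding W_def
      by (intro DERIV_diff DERIV_cmult DERIV_divide DERIV_mult Mo_deriv Pr_deriv zab) (use a0 b0 Pb in auto)
    have A: "h z powr \<alpha> > 0" and B: "h z powr \<beta> > 0" using pos[of z] zab by auto
    have Mb: "Mo \<beta> z \<ge> 0" using Mo_bounds[of \<beta> z] b0 zab by auto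
    have F1: "(\<beta>+2) * Mo \<beta> z \<le> (\<beta>+1) * Pr \<beta> z * Pr \<beta> z / h z powr \<beta>"
    proof -
      have "Mo \<beta> z \<le> Pr \<beta> z * GGp \<beta> z / (\<beta>+2)" by (rule Mom_pre) (use b0 zab in auto)
      hence "(\<beta>+2) * Mo \<beta> z \<le> Pr \<beta> z * GGp \<beta> z" using b0 by (simp add: field_simps)
      thus ?thesis by (simp add: GGp_def algebra_simps)
    qed
    have F2: "(\<beta>+1) * Pr \<beta> z * h z powr \<alpha> / h z powr \<beta> \<le> (\<alpha>+1) * Pr \<alpha> z"
    proof -
      have "Pr \<alpha> z \<ge> h z powr \<alpha> * GGp \<beta> z / (\<alpha>+1)" by (rule Pow_pre) (use b0 ba zab in auto)
      hence "h z powr \<alpha> * GGp \<beta> z \<le> (\<alpha>+1) * Pr \<alpha> z" using a0 by (simp add: field_simps)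
      thus ?thesis by (simp add: GGp_def algebra_simps)
    qed
    have "0 \<le> (\<alpha>+2) * Pr \<alpha> z - (\<beta>+2) * (((Pr \<beta> z * Pr \<alpha> z + h z powr \<alpha> * Mo \<beta> z) * Pr \<beta> z
           - Mo \<beta> z * Pr \<alpha> z * h z powr \<beta>) / (Pr \<beta> z * Pr \<beta> z))"
      by (rule key_alg[OF Pb B Mb _ ba b0 F1 F2]) (use Pa in simp)
    thus "\<exists>y. DERIV W z :> y \<and> 0 \<le> y" using d by blast
  qed
  have lower: "W x0 \<ge> - (\<beta>+2) * ((x0 - a) * (x0 - a) * Bd powr \<alpha>)" if x0: "a < x0" "x0 < b" for x0
  proof -
    have Pb: "Pr \<beta> x0 > 0" using Pr_pos[of \<beta> x0] b0 x0 by auto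
    have Pa0: "Pr \<alpha> x0 \<ge> 0" using Pr_pos[of \<alpha> x0] a0 x0 by auto
    have "Mo \<beta> x0 * Pr \<alpha> x0 / Pr \<beta> x0 \<le> (x0 - a) * Pr \<beta> x0 * Pr \<alpha> x0 / Pr \<beta> x0"
      using Mo_bounds(2)[of \<beta> x0] b0 x0 Pb Pa0 by (intro divide_right_mono mult_right_mono) auto
    also have "\<dots> = (x0 - a) * Pr \<alpha> x0" using Pb by simp
    also have "\<dots> \<le> (x0 - a) * ((x0 - a) * Bd powr \<alpha>)"
      using Pr_bound[of \<alpha> x0] a0 x0 by (intro mult_left_mono) auto
    finally have q: "Mo \<beta> x0 * Pr \<alpha> x0 / Pr \<beta> x0 \<le> (x0 - a) * (x0 - a) * Bd powr \<alpha>" by simp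
    have "Mo \<alpha> x0 \<ge> 0" using Mo_bounds(1)[of \<alpha> x0] a0 x0 by auto
    hence m0: "(\<alpha>+2) * Mo \<alpha> x0 \<ge> 0" using a0 by simp
    have q2: "(\<beta>+2) * (Mo \<beta> x0 * Pr \<alpha> x0 / Pr \<beta> x0) \<le> (\<beta>+2) * ((x0 - a) * (x0 - a) * Bd powr \<alpha>)"
      using q b0 by (intro mult_left_mono) auto
    have "- (\<beta>+2) * ((x0 - a) * (x0 - a) * Bd powr \<alpha>) = - ((\<beta>+2) * ((x0 - a) * (x0 - a) * Bd powr \<alpha>))"
      by (rule mult_minus_left)
    thus ?thesis unfolding W_def using m0 q2 by linarith
  qed
  have Wb: "W b \<ge> 0"
  proof (rule tendsto_upperbound)
    have "((\<lambda>x0. - (\<beta>+2) * ((x0 - a) * (x0 - a) * Bd powr \<alpha>)) \<longlongrightarrow>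
        - (\<beta>+2) * ((a - a) * (a - a) * Bd powr \<alpha>)) (at_right a)"
      by (intro tendsto_intros)
    thus "((\<lambda>x0. - (\<beta>+2) * ((x0 - a) * (x0 - a) * Bd powr \<alpha>)) \<longlongrightarrow> 0) (at_right a)" by simp
    show "\<forall>\<^sub>F x0 in at_right a. W b \<ge> - (\<beta>+2) * ((x0 - a) * (x0 - a) * Bd powr \<alpha>)"
      using eventually_at_right_real[OF ab]
      by eventually_elim (use mono lower in \<open>auto intro: order_trans\<close>)
  qed simp
  have Tp: "Tot \<alpha> > 0" "Tot \<beta> > 0" using Tot_pos a0 b0 by auto
  have PrT: "Pr \<gamma> b = Tot \<gamma>" for \<gamma> by (simp add: Pr_def Tot_def)
  have "W b = Tot \<alpha> * ((\<alpha>+2) * (b - gg \<alpha>) - (\<beta>+2) * (b - gg \<beta>))"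
    unfolding W_def Mo_b[OF a0] Mo_b[OF b0] PrT using Tp by (simp add: field_simps)
  thus ?thesis using Wb Tp by (simp add: zero_le_mult_iff)
qed

end


context cf begin

lemma Phi_anti: "\<gamma> \<ge> 0 \<Longrightarrow> a \<le> x \<Longrightarrow> x \<le> y \<Longrightarrow> y \<le> b \<Longrightarrow> Phi \<gamma> y \<le> Phi \<gamma> x"
  unfolding Phi_def by (rule integral_subset_le) (use hint nn in auto)

lemma part1:
  assumes b0: "0 < \<beta>" and ba: "\<beta> \<le> \<alpha>"
  shows "Phi \<beta> (gg \<alpha>) / Tot \<beta> \<ge> ((\<beta>+1)/(\<alpha>+2)) powr (\<beta>+1)"
proof -
  have a0: "\<alpha> > 0" using b0 ba by simp
  define c where "c = gg \<alpha>"
  define d where "d = gg \<beta>"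
  have c: "a < c" "c < b" using gg_in[OF a0] by (auto simp: c_def)
  have d: "a < d" "d < b" using gg_in[OF b0] by (auto simp: d_def)
  have T: "Tot \<beta> > 0" using Tot_pos b0 by simp
  have gr: "Phi \<beta> d \<ge> ((\<beta>+1)/(\<beta>+2)) powr (\<beta>+1) * Tot \<beta>" using GR[OF b0] by (simp add: d_def)
  have "Phi \<beta> c \<ge> ((\<beta>+1)/(\<alpha>+2)) powr (\<beta>+1) * Tot \<beta>"
  proof (cases "c \<le> d")
    case True
    have "((\<beta>+1)/(\<alpha>+2)) powr (\<beta>+1) \<le> ((\<beta>+1)/(\<beta>+2)) powr (\<beta>+1)"
      using b0 ba by (intro powr_mono2 divide_left_mono) auto
    hence "((\<beta>+1)/(\<alpha>+2)) powr (\<beta>+1) * Tot \<beta> \<le> ((\<beta>+1)/(\<beta>+2)) powr (\<beta>+1) * Tot \<beta>"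
      using T by (intro mult_right_mono) auto
    also have "\<dots> \<le> Phi \<beta> d" by (rule gr)
    also have "\<dots> \<le> Phi \<beta> c" using True c d b0 by (intro Phi_anti) auto
    finally show ?thesis .
  next
    case False
    hence dc: "d < c" by simp
    have hom: "Phi \<beta> d / (b - d) powr (\<beta>+1) \<le> Phi \<beta> c / (b - c) powr (\<beta>+1)"
      by (rule Hom) (use b0 c d dc in auto)
    have bc: "b - c > 0" "b - d > 0" using c d by auto
    have hom2: "((b - c)/(b - d)) powr (\<beta>+1) * Phi \<beta> d \<le> Phi \<beta> c"
    proof -
      have "((b - c)/(b - d)) powr (\<beta>+1) * Phi \<beta> d = (b - c) powr (\<beta>+1) * (Phi \<beta> d / (b - d) powr (\<beta>+1))"
        using bc by (simp add: powr_divide)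
      also have "\<dots> \<le> (b - c) powr (\<beta>+1) * (Phi \<beta> c / (b - c) powr (\<beta>+1))"
        using hom by (intro mult_left_mono) auto
      also have "\<dots> = Phi \<beta> c" using bc by simp
      finally show ?thesis .
    qed
    have cc: "(\<beta>+2) * (b - d) \<le> (\<alpha>+2) * (b - c)" using Ccomp[OF b0 ba] by (simp add: c_def d_def)
    have r: "(\<beta>+2)/(\<alpha>+2) \<le> (b - c)/(b - d)"
      using cc bc a0 b0 by (simp add: field_simps)
    have "((\<beta>+1)/(\<alpha>+2)) powr (\<beta>+1) = ((\<beta>+2)/(\<alpha>+2)) powr (\<beta>+1) * ((\<beta>+1)/(\<beta>+2)) powr (\<beta>+1)"
    proof -
      have n: "\<alpha>+2 \<noteq> 0" "\<beta>+2 \<noteq> 0" using a0 b0 by auto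
      have "((\<beta>+2)/(\<alpha>+2)) * ((\<beta>+1)/(\<beta>+2)) = ((\<beta>+2)*(\<beta>+1))/((\<beta>+2)*(\<alpha>+2))"
        by (simp only: times_divide_times_eq mult.commute)
      also have "\<dots> = (\<beta>+1)/(\<alpha>+2)" by (rule mult_divide_mult_cancel_left[OF n(2)])
      finally have eq: "(\<beta>+1)/(\<alpha>+2) = ((\<beta>+2)/(\<alpha>+2)) * ((\<beta>+1)/(\<beta>+2))" by (rule sym)
      show ?thesis unfolding eq by (rule powr_mult)
    qed
    also have "\<dots> * Tot \<beta> \<le> ((b - c)/(b - d)) powr (\<beta>+1) * (((\<beta>+1)/(\<beta>+2)) powr (\<beta>+1) * Tot \<beta>)"
    proof -
      have "((\<beta>+2)/(\<alpha>+2)) powr (\<beta>+1) \<le> ((b - c)/(b - d)) powr (\<beta>+1)"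
        using r a0 b0 by (intro powr_mono2) auto
      thus ?thesis using T by (simp add: mult.assoc mult_right_mono)
    qed
    also have "\<dots> \<le> ((b - c)/(b - d)) powr (\<beta>+1) * Phi \<beta> d" using gr by (intro mult_left_mono) auto
    also have "\<dots> \<le> Phi \<beta> c" by (rule hom2)
    finally show ?thesis .
  qed
  thus ?thesis using T by (simp add: c_def field_simps)
qed

lemma part2:
  assumes a0: "0 < \<alpha>" and ab': "\<alpha> \<le> \<beta>"
  shows "Phi \<beta> (gg \<alpha>) / Tot \<beta> \<ge> ((\<alpha>+1)/(\<alpha>+2)) powr (\<beta>+1)"
proof -
  define c where "c = gg \<alpha>"
  have c: "a < c" "c < b" using gg_in[OF a0] by (auto simp: c_def)
  have Ta: "Tot \<alpha> > 0" using Tot_pos a0 by simp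
  have gr: "Phi \<alpha> c / Tot \<alpha> \<ge> ((\<alpha>+1)/(\<alpha>+2)) powr (\<alpha>+1)"
    using GR[OF a0] Ta by (simp add: c_def field_simps)
  have "((\<alpha>+1)/(\<alpha>+2)) powr (\<beta>+1) = (((\<alpha>+1)/(\<alpha>+2)) powr (\<alpha>+1)) powr ((\<beta>+1)/(\<alpha>+1))"
    using a0 by (simp add: powr_powr)
  also have "\<dots> \<le> (Phi \<alpha> c / Tot \<alpha>) powr ((\<beta>+1)/(\<alpha>+1))"
    using gr a0 ab' by (intro powr_mono2) auto
  also have "\<dots> \<le> Phi \<beta> c / Tot \<beta>" by (rule Berwald) (use a0 ab' c in auto)
  finally show ?thesis by (simp add: c_def)
qed

end

theorem theorem1p2:
  fixes a b \<alpha> \<beta> :: real and h :: "real \<Rightarrow> real"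
  assumes "a < b"
    and "concave_on {a..b} h"
    and "\<And>t. t \<in> {a..b} \<Longrightarrow> h t \<ge> 0"
    and "\<exists>t\<in>{a..b}. h t \<noteq> 0"
    and "\<alpha> > 0" and "\<beta> > 0"
  shows "(\<beta> \<le> \<alpha> \<longrightarrow>
           integral {g_alpha \<alpha> a b h..b} (\<lambda>t. h t powr \<beta>) / integral {a..b} (\<lambda>t. h t powr \<beta>)
             \<ge> ((\<beta> + 1) / (\<alpha> + 2)) powr (\<beta> + 1))
       \<and> (\<alpha> \<le> \<beta> \<longrightarrow>
           integral {g_alpha \<alpha> a b h..b} (\<lambda>t. h t powr \<beta>) / integral {a..b} (\<lambda>t. h t powr \<beta>)
             \<ge> ((\<alpha> + 1) / (\<alpha> + 2)) powr (\<beta> + 1))"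
proof -
  interpret cf a b h by (rule cf.intro) (use assms in auto)
  show ?thesis
    using part1[of \<beta> \<alpha>] part2[of \<alpha> \<beta>] assms(5,6) unfolding Phi_def Tot_def by auto
qed


end
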